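(* For every positive integer $r$, there exists a $2$-coverable connected binary matroid $M$ of rank $r$ such that in any rainbow circuit-free coloring of $M$ in which each color is used at most three times, the number of colors is at most $\lceil 6r/7\rceil$.
   Context: A coloring of the ground set is a partition into nonempty color classes; it is rainbow circuit-free if no circuit of $M$ has all its elements of pairwise different colors. A matroid is $k$-coverable if its ground set can be covered by at most $k$ independent sets. A matroid is connected if any two elements lie in a common circuit. A matroid is binary if it is representable over $GF(2)$. *)

theory Defs
  imports Complex_Main "HOL-Library.Z2"
begin

definition matroid :: "'a set \<Rightarrow> ('a set \<Rightarrow> bool) \<Rightarrow> bool" where
  "matroid E indep \<longleftrightarrow> finite E
     \<and> (\<forall>X. indep X \<longrightarrow> X \<subseteq> E)
     \<and> indep {}
     \<and> (\<forall>X Y. indep X \<and> Y \<subseteq> X \<longrightarrow> indep Y)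
     \<and> (\<forall>X Y. indep X \<and> indep Y \<and> card X < card Y \<longrightarrow> (\<exists>y\<in>Y - X. indep (insert y X)))"

definition circuit :: "'a set \<Rightarrow> ('a set \<Rightarrow> bool) \<Rightarrow> 'a set \<Rightarrow> bool" where
  "circuit E indep C \<longleftrightarrow> C \<subseteq> E \<and> \<not> indep C \<and> (\<forall>x\<in>C. indep (C - {x}))"

definition matroid_rank :: "'a set \<Rightarrow> ('a set \<Rightarrow> bool) \<Rightarrow> nat" where
  "matroid_rank E indep = Max (card ` {X. X \<subseteq> E \<and> indep X})"

text \<open>k-coverable: E is covered by at most k independent sets
  (the empty set is independent, so exactly k sets suffice).\<close>
definition coverable :: "nat \<Rightarrow> 'a set \<Rightarrow> ('a set \<Rightarrow> bool) \<Rightarrow> bool" where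
  "coverable k E indep \<longleftrightarrow>
     (\<exists>I :: nat \<Rightarrow> 'a set. (\<forall>i<k. indep (I i)) \<and> E \<subseteq> (\<Union>i<k. I i))"

definition matroid_connected :: "'a set \<Rightarrow> ('a set \<Rightarrow> bool) \<Rightarrow> bool" where
  "matroid_connected E indep \<longleftrightarrow>
     (\<forall>x\<in>E. \<forall>y\<in>E. x \<noteq> y \<longrightarrow> (\<exists>C. circuit E indep C \<and> x \<in> C \<and> y \<in> C))"

text \<open>Linear independence over GF(2) of the family (v x) for x in X, vectors in GF(2)^nat:
  a GF(2)-linear combination is the sum over a subset Y of X.\<close>
definition gf2_indep :: "('a \<Rightarrow> nat \<Rightarrow> bit) \<Rightarrow> 'a set \<Rightarrow> bool" where
  "gf2_indep v X \<longleftrightarrow>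
     (\<forall>Y. Y \<subseteq> X \<and> Y \<noteq> {} \<longrightarrow> (\<lambda>i. \<Sum>y\<in>Y. v y i) \<noteq> (\<lambda>i. 0))"

definition binary :: "'a set \<Rightarrow> ('a set \<Rightarrow> bool) \<Rightarrow> bool" where
  "binary E indep \<longleftrightarrow>
     (\<exists>v :: 'a \<Rightarrow> nat \<Rightarrow> bit. \<forall>X. X \<subseteq> E \<longrightarrow> (indep X \<longleftrightarrow> gf2_indep v X))"

text \<open>A colouring is a map c from the ground set to colours; the colour classes are the
  (nonempty) fibres on E, and the number of colours is card (c ` E).
  Rainbow circuit-free: no circuit has all its elements of pairwise different colours.\<close>
definition rainbow_circuit_free :: "'a set \<Rightarrow> ('a set \<Rightarrow> bool) \<Rightarrow> ('a \<Rightarrow> 'c) \<Rightarrow> bool" where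
  "rainbow_circuit_free E indep c \<longleftrightarrow> (\<nexists>C. circuit E indep C \<and> inj_on c C)"

end

theory Submission
  imports Defs "HOL-Library.Function_Algebras"
begin


definition sc :: "bit \<Rightarrow> (nat \<Rightarrow> bit) \<Rightarrow> (nat \<Rightarrow> bit)" where
  "sc a f = (\<lambda>i. a * f i)"

interpretation G: vector_space sc
  by unfold_locales (auto simp: sc_def fun_eq_iff algebra_simps)

lemma sum_fun_apply: "(sum f A) i = (\<Sum>a\<in>A. (f a i :: 'b::comm_monoid_add))"
  by (induction A rule: infinite_finite_induct) auto

lemma bit_add_self [simp]: "(x::bit) + x = 0"
  by (cases x) simp_all

lemma bit_cases2: "(x::bit) = 0 \<or> x = 1"
  by (cases x) simp_all

lemma fun_add_self: "(f::nat\<Rightarrow>bit) + f = 0"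
  by (simp add: fun_eq_iff)

lemma fun_add_eq0: "(f::nat\<Rightarrow>bit) + g = 0 \<Longrightarrow> f = g"
  by (metis add.assoc add.left_neutral fun_add_self)

lemma gf2_indep_alt: "gf2_indep v X \<longleftrightarrow> (\<forall>Y. Y \<subseteq> X \<and> Y \<noteq> {} \<longrightarrow> (\<Sum>y\<in>Y. v y) \<noteq> 0)"
  unfolding gf2_indep_def by (simp add: fun_eq_iff sum_fun_apply)

lemma gf2_indep_subset: "gf2_indep v X \<Longrightarrow> Y \<subseteq> X \<Longrightarrow> gf2_indep v Y"
  unfolding gf2_indep_def by blast

lemma gf2_indep_finite: assumes "gf2_indep v X" shows "finite X"
proof (rule ccontr)
  assume "\<not> finite X"
  then have "X \<noteq> {}" "(\<Sum>y\<in>X. v y) = 0" by auto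
  then show False using assms unfolding gf2_indep_alt by blast
qed

lemma gf2_indep_inj: assumes "gf2_indep v X" shows "inj_on v X"
proof (rule inj_onI)
  fix a b assume ab: "a \<in> X" "b \<in> X" "v a = v b"
  show "a = b"
  proof (rule ccontr)
    assume "a \<noteq> b"
    then have "(\<Sum>y\<in>{a,b}. v y) = 0" using ab by (simp add: fun_add_self)
    with assms ab show False unfolding gf2_indep_alt by (metis empty_not_insert empty_subsetI insert_subset)
  qed
qed

lemma sc_bit: "sc (u::bit) w = (if u = 0 then 0 else w)"
  by (cases u) (auto simp: sc_def fun_eq_iff)

lemma gf2_indep_independent:
  assumes "gf2_indep v X" shows "G.independent (v ` X)"
proof
  assume "G.dependent (v ` X)"
  then obtain t u w where t: "finite t" "t \<subseteq> v ` X" "(\<Sum>w\<in>t. sc (u w) w) = 0" "w \<in> t" "u w \<noteq> 0"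
    unfolding G.dependent_explicit by blast
  define t' where "t' = {w\<in>t. u w = 1}"
  have "(\<Sum>w\<in>t. sc (u w) w) = (\<Sum>w\<in>t. if u w = 1 then w else 0)"
  proof (rule sum.cong)
    fix w assume "w \<in> t"
    show "sc (u w) w = (if u w = 1 then w else 0)"
      using bit_cases2[of "u w"] by (auto simp: sc_bit)
  qed simp
  also have "\<dots> = (\<Sum>w\<in>t'. w)" unfolding t'_def using t(1) by (simp add: sum.inter_filter)
  finally have s0: "(\<Sum>w\<in>t'. w) = 0" using t(3) by simp
  define Y where "Y = {x\<in>X. v x \<in> t'}"
  have inj: "inj_on v X" using gf2_indep_inj[OF assms] .
  have injY: "inj_on v Y" by (rule inj_on_subset[OF inj]) (auto simp: Y_def)
  have vY: "v ` Y = t'" unfolding Y_def t'_def using t(2) by auto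
  have "(\<Sum>y\<in>Y. v y) = (\<Sum>w\<in>v ` Y. w)" using injY by (simp add: sum.reindex)
  then have "(\<Sum>y\<in>Y. v y) = 0" using vY s0 by simp
  moreover have "w \<in> t'" using t(4,5) bit_cases2[of "u w"] unfolding t'_def by auto
  then have "Y \<noteq> {}" using vY by auto
  moreover have "Y \<subseteq> X" unfolding Y_def by auto
  ultimately show False using assms unfolding gf2_indep_alt by auto
qed

lemma not_indep_insert_span:
  assumes "gf2_indep v X" "\<not> gf2_indep v (insert y X)" "y \<notin> X"
  shows "v y \<in> G.span (v ` X)"
proof -
  obtain Z where Z: "Z \<subseteq> insert y X" "Z \<noteq> {}" "(\<Sum>z\<in>Z. v z) = 0"
    using assms(2) unfolding gf2_indep_alt by blast
  have fin: "finite Z" using Z(1) gf2_indep_finite[OF assms(1)] by (meson finite_insert finite_subset)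
  have "y \<in> Z"
  proof (rule ccontr)
    assume "y \<notin> Z" then have "Z \<subseteq> X" using Z(1) by auto
    then show False using assms(1) Z unfolding gf2_indep_alt by auto
  qed
  then have "v y + (\<Sum>z\<in>Z-{y}. v z) = 0" using Z(3) fin by (simp add: sum.remove)
  then have "v y = (\<Sum>z\<in>Z-{y}. v z)" by (rule fun_add_eq0)
  also have "\<dots> \<in> G.span (v ` X)"
    by (rule G.span_sum) (use Z(1) in \<open>auto intro: G.span_base\<close>)
  finally show ?thesis .
qed

definition vindep :: "nat set \<Rightarrow> (nat \<Rightarrow> nat \<Rightarrow> bit) \<Rightarrow> nat set \<Rightarrow> bool" where
  "vindep E v X \<longleftrightarrow> X \<subseteq> E \<and> gf2_indep v X"

lemma vindep_matroid: assumes "finite E" shows "matroid E (vindep E v)"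
  unfolding matroid_def
proof (intro conjI allI impI)
  show "finite E" by fact
  fix X assume "vindep E v X" then show "X \<subseteq> E" by (simp add: vindep_def)
next
  show "vindep E v {}" by (simp add: vindep_def gf2_indep_def)
next
  fix X Y assume "vindep E v X \<and> Y \<subseteq> X" then show "vindep E v Y"
    by (auto simp: vindep_def intro: gf2_indep_subset)
next
  fix X Y assume H: "vindep E v X \<and> vindep E v Y \<and> card X < card Y"
  show "\<exists>y\<in>Y - X. vindep E v (insert y X)"
  proof (rule ccontr)
    assume N: "\<not> ?thesis"
    have gx: "gf2_indep v X" and gy: "gf2_indep v Y" and XE: "X \<subseteq> E" and YE: "Y \<subseteq> E"
      using H by (auto simp: vindep_def)
    have "v ` Y \<subseteq> G.span (v ` X)"
    proof
      fix w assume "w \<in> v ` Y" then obtain y where y: "y \<in> Y" "w = v y" by auto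
      show "w \<in> G.span (v ` X)"
      proof (cases "y \<in> X")
        case True then show ?thesis using y by (auto intro: G.span_base)
      next
        case False
        then have "\<not> gf2_indep v (insert y X)" using N y YE XE by (auto simp: vindep_def)
        then show ?thesis using not_indep_insert_span[OF gx _ False] y by simp
      qed
    qed
    then have "card (v ` Y) \<le> card (v ` X)"
      using G.independent_span_bound[OF _ gf2_indep_independent[OF gy]] gf2_indep_finite[OF gx] by auto
    then have "card Y \<le> card X"
      using card_image[OF gf2_indep_inj[OF gx]] card_image[OF gf2_indep_inj[OF gy]] by simp
    then show False using H by simp
  qed
qed

lemma circuitI:
  assumes CE: "C \<subseteq> E" and fin: "finite C" and s0: "(\<Sum>y\<in>C. v y) = 0" and x0: "x0 \<in> C"
    and ind: "gf2_indep v (C - {x0})"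
  shows "circuit E (vindep E v) C"
proof -
  have nd: "\<not> gf2_indep v C" using s0 x0 unfolding gf2_indep_alt by auto
  have all: "gf2_indep v (C - {x})" if xC: "x \<in> C" for x
    unfolding gf2_indep_alt
  proof (intro allI impI)
    fix Y assume Y: "Y \<subseteq> C - {x} \<and> Y \<noteq> {}"
    show "(\<Sum>y\<in>Y. v y) \<noteq> 0"
    proof
      assume sY: "(\<Sum>y\<in>Y. v y) = 0"
      show False
      proof (cases "x0 \<in> Y")
        case False
        then have "Y \<subseteq> C - {x0}" using Y by auto
        then show False using ind Y sY unfolding gf2_indep_alt by auto
      next
        case True
        have "(\<Sum>y\<in>C. v y) = (\<Sum>y\<in>C - Y. v y) + (\<Sum>y\<in>Y. v y)"
          using Y fin by (intro sum.subset_diff) auto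
        then have "(\<Sum>y\<in>C - Y. v y) = 0" using s0 sY by simp
        moreover have "C - Y \<subseteq> C - {x0}" "C - Y \<noteq> {}" using True Y xC by auto
        ultimately show False using ind unfolding gf2_indep_alt by auto
      qed
    qed
  qed
  show ?thesis unfolding circuit_def vindep_def using CE nd all by auto
qed

lemma vindep_binary: "binary E (vindep E v)"
  unfolding binary_def vindep_def by blast



declare sum_of_bool_eq [simp del]

definition wv :: "nat \<Rightarrow> nat \<Rightarrow> bit" where
  "wv p k = (if k = 0 then 1 else if k < 4 then of_bool (bit p (k - 1)) else 0)"

definition uv :: "nat \<Rightarrow> nat \<Rightarrow> bit" where
  "uv j k = of_bool (k = j)"

definition sh :: "nat \<Rightarrow> (nat \<Rightarrow> bit) \<Rightarrow> nat \<Rightarrow> bit" where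
  "sh i f k = (if k div 4 = i then f (k mod 4) else 0)"

definition xv :: "nat \<Rightarrow> nat \<Rightarrow> nat \<Rightarrow> bit" where
  "xv m s k = (if k < 4*m then of_bool (k mod 4 = 0) else of_bool (k < 4*m+s))"

definition vec :: "nat \<Rightarrow> nat \<Rightarrow> nat \<Rightarrow> nat \<Rightarrow> bit" where
  "vec m s n = (if n < 8*m then sh (n div 8) (wv (n mod 8))
     else if n < 8*m+s then uv (4*m + (n - 8*m))
     else if n = 8*m+s then xv m s else 0)"

definition EE :: "nat \<Rightarrow> nat \<Rightarrow> nat set" where
  "EE m s = {..< 8*m+s+1}"

definition Q :: "nat \<Rightarrow> nat set" where
  "Q i = {n. n div 8 = i}"

lemma ofb_add [simp]: "(of_bool P :: bit) + of_bool R = of_bool (P \<noteq> R)"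
  by (cases P; cases R) auto

lemma of_nat_bit: "(of_nat n :: bit) = of_bool (odd n)"
  by (induction n) auto

lemma sum_one_bit: "(\<Sum>z\<in>Z. (1::bit)) = of_bool (odd (card Z))"
  by (simp add: of_nat_bit)

lemma bits_differ:
  assumes "a \<noteq> b" "a < 8" "b < (8::nat)"
  shows "\<exists>t<3. bit a t \<noteq> bit b t"
proof (rule ccontr)
  assume "\<not> ?thesis"
  then have h: "\<forall>t<3. bit a t = bit b t" by auto
  have "bit a t = bit b t" for t
  proof (cases "t < 3")
    case True then show ?thesis using h by auto
  next
    case False
    then have "(2::nat)^3 \<le> 2^t" by (intro power_increasing) auto
    then have "a div 2^t = 0" "b div 2^t = 0" using assms by auto
    then show ?thesis by (simp add: bit_iff_odd)
  qed
  then have "a = b" by (simp add: bit_eq_iff)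
  then show False using assms by simp
qed

lemma vec_block: "n < 8*m \<Longrightarrow> vec m s n = sh (n div 8) (wv (n mod 8))"
  by (simp add: vec_def)
lemma vec_e: "8*m \<le> n \<Longrightarrow> n < 8*m+s \<Longrightarrow> vec m s n = uv (4*m + (n - 8*m))"
  by (simp add: vec_def)
lemma vec_x: "vec m s (8*m+s) = xv m s"
  by (simp add: vec_def)

lemma vec_support: assumes "n \<in> EE m s" "4*m+s \<le> k" shows "vec m s n k = 0"
proof -
  have "n < 8*m+s \<or> n = 8*m+s" using assms(1) by (auto simp: EE_def)
  then consider "n < 8*m" | "8*m \<le> n" "n < 8*m+s" | "n = 8*m+s" by linarith
  then show ?thesis
  proof cases
    case 1
    then have "n div 8 < m" by auto
    moreover have "m \<le> k div 4" using assms(2) by auto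
    ultimately show ?thesis using 1 by (simp add: vec_block sh_def)
  next
    case 2 then show ?thesis using assms(2) by (simp add: vec_e uv_def)
  next
    case 3 then show ?thesis using assms(2) by (simp add: vec_x xv_def)
  qed
qed

lemma finite_EE [simp]: "finite (EE m s)" by (simp add: EE_def)

lemma sum_block_coord:
  assumes YE: "Y \<subseteq> EE m s" and nx: "8*m+s \<notin> Y" and ki: "k div 4 = i" and im: "i < m"
  shows "(\<Sum>y\<in>Y. vec m s y k) = (\<Sum>y\<in>Y \<inter> Q i. wv (y mod 8) (k mod 4))"
proof -
  have fin: "finite Y" using finite_subset[OF YE finite_EE] .
  have km: "k < 4*m" using ki im by auto
  have "vec m s y k = (if y \<in> Q i then wv (y mod 8) (k mod 4) else 0)" if "y \<in> Y" for y
  proof -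
    have "y < 8*m+s" using that YE nx by (auto simp: EE_def less_Suc_eq)
    show ?thesis
    proof (cases "y < 8*m")
      case True then show ?thesis using ki by (auto simp: vec_block sh_def Q_def)
    next
      case False
      then have "y \<notin> Q i" using im by (auto simp: Q_def)
      moreover have "vec m s y k = 0" using False \<open>y < 8*m+s\<close> km by (simp add: vec_e uv_def)
      ultimately show ?thesis by simp
    qed
  qed
  then have "(\<Sum>y\<in>Y. vec m s y k) = (\<Sum>y\<in>Y. if y \<in> Q i then wv (y mod 8) (k mod 4) else 0)"
    by (intro sum.cong) auto
  also have "\<dots> = (\<Sum>y\<in>Y \<inter> Q i. wv (y mod 8) (k mod 4))"
    using fin by (simp add: sum.inter_restrict)
  finally show ?thesis .
qed

lemma sum_e_coord:
  assumes YE: "Y \<subseteq> EE m s" and nx: "8*m+s \<notin> Y" and y0: "y0 \<in> Y" "8*m \<le> y0"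
  shows "(\<Sum>y\<in>Y. vec m s y (4*m + (y0 - 8*m))) = 1"
proof -
  have fin: "finite Y" using finite_subset[OF YE finite_EE] .
  have "vec m s y (4*m + (y0 - 8*m)) = (if y = y0 then 1 else 0)" if "y \<in> Y" for y
  proof -
    have "y < 8*m+s" using that YE nx by (auto simp: EE_def less_Suc_eq)
    show ?thesis
    proof (cases "y < 8*m")
      case True
      then have "y div 8 < m" by auto
      then show ?thesis using True y0 by (auto simp: vec_block sh_def)
    next
      case False
      then show ?thesis using \<open>y < 8*m+s\<close> y0 by (auto simp: vec_e uv_def)
    qed
  qed
  then have "(\<Sum>y\<in>Y. vec m s y (4*m + (y0 - 8*m))) = (\<Sum>y\<in>Y. if y = y0 then 1 else 0)"
    by (intro sum.cong) auto
  also have "\<dots> = 1" using fin y0 by simp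
  finally show ?thesis .
qed

lemma fun_neq_at: "f k \<noteq> g k \<Longrightarrow> f \<noteq> g" by auto

lemma crit:
  assumes XE: "X \<subseteq> EE m s" and nx: "8*m+s \<notin> X"
    and c4: "\<And>i. i < m \<Longrightarrow> card (X \<inter> Q i) \<le> 4"
    and w4: "\<And>i. i < m \<Longrightarrow> card (X \<inter> Q i) = 4 \<Longrightarrow> \<exists>k'. (\<Sum>y\<in>X \<inter> Q i. wv (y mod 8) k') \<noteq> 0"
  shows "gf2_indep (vec m s) X"
  unfolding gf2_indep_def
proof (intro allI impI)
  fix Y assume Y: "Y \<subseteq> X \<and> Y \<noteq> {}"
  have YE: "Y \<subseteq> EE m s" "8*m+s \<notin> Y" using Y XE nx by auto
  have finY: "finite Y" using finite_subset[OF YE(1) finite_EE] .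
  show "(\<lambda>i. \<Sum>y\<in>Y. vec m s y i) \<noteq> (\<lambda>i. 0)"
  proof (cases "\<exists>y\<in>Y. 8*m \<le> y")
    case True
    then obtain y0 where y0: "y0 \<in> Y" "8*m \<le> y0" by auto
    show ?thesis
      by (rule fun_neq_at[where k="4*m + (y0 - 8*m)"]) (simp add: sum_e_coord[OF YE y0])
  next
    case False
    obtain y0 where y0: "y0 \<in> Y" using Y by auto
    then have y08: "y0 < 8*m" using False by auto
    define i where "i = y0 div 8"
    have im: "i < m" using y08 unfolding i_def by auto
    define Z where "Z = Y \<inter> Q i"
    have y0Z: "y0 \<in> Z" using y0 unfolding Z_def Q_def i_def by auto
    have finZ: "finite Z" using finY unfolding Z_def by auto
    have ZX: "Z \<subseteq> X \<inter> Q i" using Y unfolding Z_def by auto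
    have finXQ: "finite (X \<inter> Q i)" using finite_subset[OF XE finite_EE] by auto
    have cZ: "card Z \<le> 4" using card_mono[OF finXQ ZX] c4[OF im] by simp
    have cZ1: "card Z \<ge> 1" using y0Z finZ by (metis One_nat_def Suc_leI card_gt_0_iff empty_iff)
    have key: "(\<Sum>y\<in>Y. vec m s y (4*i+k')) = (\<Sum>z\<in>Z. wv (z mod 8) k')" if "k' < 4" for k'
      using sum_block_coord[OF YE, of "4*i+k'" i] that im unfolding Z_def by simp
    have "\<exists>k'<4. (\<Sum>z\<in>Z. wv (z mod 8) k') \<noteq> 0"
    proof -
      have "card Z = 1 \<or> card Z = 2 \<or> card Z = 3 \<or> card Z = 4" using cZ cZ1 by arith
      then consider "odd (card Z)" | "card Z = 2" | "card Z = 4" by auto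
      then show ?thesis
      proof cases
        case 1
        have "(\<Sum>z\<in>Z. wv (z mod 8) 0) = (\<Sum>z\<in>Z. 1)" by (simp add: wv_def)
        also have "\<dots> = 1" using 1 by (simp add: of_nat_bit)
        finally show ?thesis by (intro exI[of _ 0]) simp
      next
        case 2
        then obtain a b where ab: "Z = {a,b}" "a \<noteq> b" by (meson card_2_iff)
        have "a div 8 = i" "b div 8 = i" using ab ZX by (auto simp: Q_def)
        then have "a mod 8 \<noteq> b mod 8" using ab(2) by (metis div_mod_decomp)
        then obtain t where t: "t < 3" "bit (a mod 8) t \<noteq> bit (b mod 8) t"
          using bits_differ[of "a mod 8" "b mod 8"] by auto
        have "(\<Sum>z\<in>Z. wv (z mod 8) (Suc t)) = 1"
          using ab t by (simp add: wv_def)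
        then show ?thesis using t by (intro exI[of _ "Suc t"]) auto
      next
        case 3
        then have ZXQ: "Z = X \<inter> Q i" using card_subset_eq[OF finXQ ZX] c4[OF im] card_mono[OF finXQ ZX] by simp
        obtain k' where k': "(\<Sum>z\<in>Z. wv (z mod 8) k') \<noteq> 0" using w4[OF im] 3 ZXQ by auto
        have "k' < 4"
        proof (rule ccontr)
          assume "\<not> k' < 4"
          then have "(\<Sum>z\<in>Z. wv (z mod 8) k') = 0" by (simp add: wv_def)
          then show False using k' by simp
        qed
        then show ?thesis using k' by auto
      qed
    qed
    then obtain k' where "k' < 4" "(\<Sum>z\<in>Z. wv (z mod 8) k') \<noteq> 0" by auto
    then show ?thesis using key by (intro fun_neq_at[where k="4*i+k'"]) auto
  qed
qed



definition planes14 :: "(nat \<times> nat \<times> nat \<times> nat) list" where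
  "planes14 = [(0,1,2,3), (0,1,4,5), (0,1,6,7), (0,2,4,6), (0,2,5,7), (0,3,4,7), (0,3,5,6), (1,2,4,7), (1,2,5,6), (1,3,4,6), (1,3,5,7), (2,3,4,5), (2,3,6,7), (4,5,6,7)]"

definition AGok :: "(nat \<Rightarrow> nat) \<Rightarrow> bool" where
  "AGok f \<longleftrightarrow> ((f 0 = f 1 \<or> f 0 = f 2 \<or> f 0 = f 3 \<or> f 1 = f 2 \<or> f 1 = f 3 \<or> f 2 = f 3) \<and> (f 0 = f 1 \<or> f 0 = f 4 \<or> f 0 = f 5 \<or> f 1 = f 4 \<or> f 1 = f 5 \<or> f 4 = f 5) \<and> (f 0 = f 1 \<or> f 0 = f 6 \<or> f 0 = f 7 \<or> f 1 = f 6 \<or> f 1 = f 7 \<or> f 6 = f 7) \<and> (f 0 = f 2 \<or> f 0 = f 4 \<or> f 0 = f 6 \<or> f 2 = f 4 \<or> f 2 = f 6 \<or> f 4 = f 6) \<and> (f 0 = f 2 \<or> f 0 = f 5 \<or> f 0 = f 7 \<or> f 2 = f 5 \<or> f 2 = f 7 \<or> f 5 = f 7) \<and> (f 0 = f 3 \<or> f 0 = f 4 \<or> f 0 = f 7 \<or> f 3 = f 4 \<or> f 3 = f 7 \<or> f 4 = f 7) \<and> (f 0 = f 3 \<or> f 0 = f 5 \<or> f 0 = f 6 \<or> f 3 = f 5 \<or> f 3 = f 6 \<or> f 5 = f 6) \<and> (f 1 = f 2 \<or> f 1 = f 4 \<or> f 1 = f 7 \<or> f 2 = f 4 \<or> f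 2 = f 7 \<or> f 4 = f 7) \<and> (f 1 = f 2 \<or> f 1 = f 5 \<or> f 1 = f 6 \<or> f 2 = f 5 \<or> f 2 = f 6 \<or> f 5 = f 6) \<and> (f 1 = f 3 \<or> f 1 = f 4 \<or> f 1 = f 6 \<or> f 3 = f 4 \<or> f 3 = f 6 \<or> f 4 = f 6) \<and> (f 1 = f 3 \<or> f 1 = f 5 \<or> f 1 = f 7 \<or> f 3 = f 5 \<or> f 3 = f 7 \<or> f 5 = f 7) \<and> (f 2 = f 3 \<or> f 2 = f 4 \<or> f 2 = f 5 \<or> f 3 = f 4 \<or> f 3 = f 5 \<or> f 4 = f 5) \<and> (f 2 = f 3 \<or> f 2 = f 6 \<or> f 2 = f 7 \<or> f 3 = f 6 \<or> f 3 = f 7 \<or> f 6 = f 7) \<and> (f 4 = f 5 \<or> f 4 = f 6 \<or> f 4 = f 7 \<or> f 5 = f 6 \<or> f 5 = f 7 \<or> f 6 = f 7)) \<and> (\<not>(f 0 = f 1 \<and> f 0 = f 2 \<and> f 0 = f 3) \<and> \<not>(f 0 = f 1 \<and> f 0 = f 2 \<and> f 0 = f 4) \<and> \<not>(f 0 = f 1 \<and> f 0 = f 2 \<and> f 0 = f 5) \<and> \<not>(f 0 = f 1 \<and> f 0 = f 2 \<and> f 0 = f 6) \<and> \<not>(f 0 = f 1 \<and> f 0 = f 2 \<and> f 0 = f 7) \<and> \<not>(f 0 = f 1 \<and> f 0 = f 3 \<and> f 0 = f 4) \<and> \<not>(f 0 = f 1 \<and> f 0 = f 3 \<and> f 0 =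 f 5) \<and> \<not>(f 0 = f 1 \<and> f 0 = f 3 \<and> f 0 = f 6) \<and> \<not>(f 0 = f 1 \<and> f 0 = f 3 \<and> f 0 = f 7) \<and> \<not>(f 0 = f 1 \<and> f 0 = f 4 \<and> f 0 = f 5) \<and> \<not>(f 0 = f 1 \<and> f 0 = f 4 \<and> f 0 = f 6) \<and> \<not>(f 0 = f 1 \<and> f 0 = f 4 \<and> f 0 = f 7) \<and> \<not>(f 0 = f 1 \<and> f 0 = f 5 \<and> f 0 = f 6) \<and> \<not>(f 0 = f 1 \<and> f 0 = f 5 \<and> f 0 = f 7) \<and> \<not>(f 0 = f 1 \<and> f 0 = f 6 \<and> f 0 = f 7) \<and> \<not>(f 0 = f 2 \<and> f 0 = f 3 \<and> f 0 = f 4) \<and> \<not>(f 0 = f 2 \<and> f 0 = f 3 \<and> f 0 = f 5) \<and> \<not>(f 0 = f 2 \<and> f 0 = f 3 \<and> f 0 = f 6) \<and> \<not>(f 0 = f 2 \<and> f 0 = f 3 \<and> f 0 = f 7) \<and> \<not>(f 0 = f 2 \<and> f 0 = f 4 \<and> f 0 = f 5) \<and> \<not>(f 0 = f 2 \<and> f 0 = f 4 \<and> f 0 = f 6) \<and> \<not>(f 0 = f 2 \<and> f 0 = f 4 \<and> f 0 = f 7) \<and> \<not>(f 0 = f 2 \<and> f 0 = f 5 \<and> f 0 = f 6) \<and> \<not>(f 0 = f 2 \<and> f 0 = f 5 \<and> f 0 = f 7) \<and> \<not>(f 0 = f 2 \<and> f 0 = f 6 \<and> f 0 = f 7) \<and>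 \<not>(f 0 = f 3 \<and> f 0 = f 4 \<and> f 0 = f 5) \<and> \<not>(f 0 = f 3 \<and> f 0 = f 4 \<and> f 0 = f 6) \<and> \<not>(f 0 = f 3 \<and> f 0 = f 4 \<and> f 0 = f 7) \<and> \<not>(f 0 = f 3 \<and> f 0 = f 5 \<and> f 0 = f 6) \<and> \<not>(f 0 = f 3 \<and> f 0 = f 5 \<and> f 0 = f 7) \<and> \<not>(f 0 = f 3 \<and> f 0 = f 6 \<and> f 0 = f 7) \<and> \<not>(f 0 = f 4 \<and> f 0 = f 5 \<and> f 0 = f 6) \<and> \<not>(f 0 = f 4 \<and> f 0 = f 5 \<and> f 0 = f 7) \<and> \<not>(f 0 = f 4 \<and> f 0 = f 6 \<and> f 0 = f 7) \<and> \<not>(f 0 = f 5 \<and> f 0 = f 6 \<and> f 0 = f 7) \<and> \<not>(f 1 = f 2 \<and> f 1 = f 3 \<and> f 1 = f 4) \<and> \<not>(f 1 = f 2 \<and> f 1 = f 3 \<and> f 1 = f 5) \<and> \<not>(f 1 = f 2 \<and> f 1 = f 3 \<and> f 1 = f 6) \<and> \<not>(f 1 = f 2 \<and> f 1 = f 3 \<and> f 1 = f 7) \<and> \<not>(f 1 = f 2 \<and> f 1 = f 4 \<and> f 1 = f 5) \<and> \<not>(f 1 = f 2 \<and> f 1 = f 4 \<and> f 1 = f 6) \<and> \<not>(f 1 = f 2 \<and> f 1 = f 4 \<and> f 1 = f 7) \<and> \<not>(f 1 = f 2 \<and> f 1 = f 5 \<and> f 1 = f 6) \<and> \<not>(f 1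 = f 2 \<and> f 1 = f 5 \<and> f 1 = f 7) \<and> \<not>(f 1 = f 2 \<and> f 1 = f 6 \<and> f 1 = f 7) \<and> \<not>(f 1 = f 3 \<and> f 1 = f 4 \<and> f 1 = f 5) \<and> \<not>(f 1 = f 3 \<and> f 1 = f 4 \<and> f 1 = f 6) \<and> \<not>(f 1 = f 3 \<and> f 1 = f 4 \<and> f 1 = f 7) \<and> \<not>(f 1 = f 3 \<and> f 1 = f 5 \<and> f 1 = f 6) \<and> \<not>(f 1 = f 3 \<and> f 1 = f 5 \<and> f 1 = f 7) \<and> \<not>(f 1 = f 3 \<and> f 1 = f 6 \<and> f 1 = f 7) \<and> \<not>(f 1 = f 4 \<and> f 1 = f 5 \<and> f 1 = f 6) \<and> \<not>(f 1 = f 4 \<and> f 1 = f 5 \<and> f 1 = f 7) \<and> \<not>(f 1 = f 4 \<and> f 1 = f 6 \<and> f 1 = f 7) \<and> \<not>(f 1 = f 5 \<and> f 1 = f 6 \<and> f 1 = f 7) \<and> \<not>(f 2 = f 3 \<and> f 2 = f 4 \<and> f 2 = f 5) \<and> \<not>(f 2 = f 3 \<and> f 2 = f 4 \<and> f 2 = f 6) \<and> \<not>(f 2 = f 3 \<and> f 2 = f 4 \<and> f 2 = f 7) \<and> \<not>(f 2 = f 3 \<and> f 2 = f 5 \<and> f 2 = f 6) \<and> \<not>(f 2 = f 3 \<and> f 2 = f 5 \<and> f 2 = f 7) \<and> \<not>(f 2 = f 3 \<and> f 2 = f 6 \<and> f 2 = f 7) \<and> \<not>(f 2 = f 4 \<and>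 f 2 = f 5 \<and> f 2 = f 6) \<and> \<not>(f 2 = f 4 \<and> f 2 = f 5 \<and> f 2 = f 7) \<and> \<not>(f 2 = f 4 \<and> f 2 = f 6 \<and> f 2 = f 7) \<and> \<not>(f 2 = f 5 \<and> f 2 = f 6 \<and> f 2 = f 7) \<and> \<not>(f 3 = f 4 \<and> f 3 = f 5 \<and> f 3 = f 6) \<and> \<not>(f 3 = f 4 \<and> f 3 = f 5 \<and> f 3 = f 7) \<and> \<not>(f 3 = f 4 \<and> f 3 = f 6 \<and> f 3 = f 7) \<and> \<not>(f 3 = f 5 \<and> f 3 = f 6 \<and> f 3 = f 7) \<and> \<not>(f 4 = f 5 \<and> f 4 = f 6 \<and> f 4 = f 7))"

lemma agq0: "AGok f \<Longrightarrow> (f 0 = f 1 \<or> f 0 = f 2 \<or> f 0 = f 3 \<or> f 1 = f 2 \<or> f 1 = f 3 \<or> f 2 = f 3)" unfolding AGok_def by (elim conjE) assumption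
lemma agq1: "AGok f \<Longrightarrow> (f 0 = f 1 \<or> f 0 = f 2 \<or> f 0 = f 4 \<or> f 1 = f 2 \<or> f 1 = f 4 \<or> f 2 = f 4)" unfolding AGok_def by (smt (z3))
lemma agq2: "AGok f \<Longrightarrow> (f 0 = f 1 \<or> f 0 = f 2 \<or> f 0 = f 5 \<or> f 1 = f 2 \<or> f 1 = f 5 \<or> f 2 = f 5)" unfolding AGok_def by (smt (z3))
lemma agq3: "AGok f \<Longrightarrow> (f 0 = f 1 \<or> f 0 = f 2 \<or> f 0 = f 6 \<or> f 1 = f 2 \<or> f 1 = f 6 \<or> f 2 = f 6)" unfolding AGok_def by (smt (z3))
lemma agq4: "AGok f \<Longrightarrow> (f 0 = f 1 \<or> f 0 = f 2 \<or> f 0 = f 7 \<or> f 1 = f 2 \<or> f 1 = f 7 \<or> f 2 = f 7)" unfolding AGok_def by (smt (z3))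
lemma agq5: "AGok f \<Longrightarrow> (f 0 = f 1 \<or> f 0 = f 3 \<or> f 0 = f 4 \<or> f 1 = f 3 \<or> f 1 = f 4 \<or> f 3 = f 4)" unfolding AGok_def by (smt (z3))
lemma agq6: "AGok f \<Longrightarrow> (f 0 = f 1 \<or> f 0 = f 3 \<or> f 0 = f 5 \<or> f 1 = f 3 \<or> f 1 = f 5 \<or> f 3 = f 5)" unfolding AGok_def by (smt (z3))
lemma agq7: "AGok f \<Longrightarrow> (f 0 = f 1 \<or> f 0 = f 3 \<or> f 0 = f 6 \<or> f 1 = f 3 \<or> f 1 = f 6 \<or> f 3 = f 6)" unfolding AGok_def by (smt (z3))
lemma agq8: "AGok f \<Longrightarrow> (f 0 = f 1 \<or> f 0 = f 3 \<or> f 0 = f 7 \<or> f 1 = f 3 \<or> f 1 = f 7 \<or> f 3 = f 7)" unfolding AGok_def by (smt (z3))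
lemma agq9: "AGok f \<Longrightarrow> (f 0 = f 1 \<or> f 0 = f 4 \<or> f 0 = f 5 \<or> f 1 = f 4 \<or> f 1 = f 5 \<or> f 4 = f 5)" unfolding AGok_def by (elim conjE) assumption
lemma agq10: "AGok f \<Longrightarrow> (f 0 = f 1 \<or> f 0 = f 4 \<or> f 0 = f 6 \<or> f 1 = f 4 \<or> f 1 = f 6 \<or> f 4 = f 6)" unfolding AGok_def by (smt (z3))
lemma agq11: "AGok f \<Longrightarrow> (f 0 = f 1 \<or> f 0 = f 4 \<or> f 0 = f 7 \<or> f 1 = f 4 \<or> f 1 = f 7 \<or> f 4 = f 7)" unfolding AGok_def by (smt (z3))
lemma agq12: "AGok f \<Longrightarrow> (f 0 = f 1 \<or> f 0 = f 5 \<or> f 0 = f 6 \<or> f 1 = f 5 \<or> f 1 = f 6 \<or> f 5 = f 6)" unfolding AGok_def by (smt (z3))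
lemma agq13: "AGok f \<Longrightarrow> (f 0 = f 1 \<or> f 0 = f 5 \<or> f 0 = f 7 \<or> f 1 = f 5 \<or> f 1 = f 7 \<or> f 5 = f 7)" unfolding AGok_def by (smt (z3))
lemma agq14: "AGok f \<Longrightarrow> (f 0 = f 1 \<or> f 0 = f 6 \<or> f 0 = f 7 \<or> f 1 = f 6 \<or> f 1 = f 7 \<or> f 6 = f 7)" unfolding AGok_def by (elim conjE) assumption
lemma agq15: "AGok f \<Longrightarrow> (f 0 = f 2 \<or> f 0 = f 3 \<or> f 0 = f 4 \<or> f 2 = f 3 \<or> f 2 = f 4 \<or> f 3 = f 4)" unfolding AGok_def by (smt (z3))
lemma agq16: "AGok f \<Longrightarrow> (f 0 = f 2 \<or> f 0 = f 3 \<or> f 0 = f 5 \<or> f 2 = f 3 \<or> f 2 = f 5 \<or> f 3 = f 5)" unfolding AGok_def by (smt (z3))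
lemma agq17: "AGok f \<Longrightarrow> (f 0 = f 2 \<or> f 0 = f 3 \<or> f 0 = f 6 \<or> f 2 = f 3 \<or> f 2 = f 6 \<or> f 3 = f 6)" unfolding AGok_def by (smt (z3))
lemma agq18: "AGok f \<Longrightarrow> (f 0 = f 2 \<or> f 0 = f 3 \<or> f 0 = f 7 \<or> f 2 = f 3 \<or> f 2 = f 7 \<or> f 3 = f 7)" unfolding AGok_def by (smt (z3))
lemma agq19: "AGok f \<Longrightarrow> (f 0 = f 2 \<or> f 0 = f 4 \<or> f 0 = f 5 \<or> f 2 = f 4 \<or> f 2 = f 5 \<or> f 4 = f 5)" unfolding AGok_def by (smt (z3))
lemma agq20: "AGok f \<Longrightarrow> (f 0 = f 2 \<or> f 0 = f 4 \<or> f 0 = f 6 \<or> f 2 = f 4 \<or> f 2 = f 6 \<or> f 4 = f 6)" unfolding AGok_def by (elim conjE) assumption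
lemma agq21: "AGok f \<Longrightarrow> (f 0 = f 2 \<or> f 0 = f 4 \<or> f 0 = f 7 \<or> f 2 = f 4 \<or> f 2 = f 7 \<or> f 4 = f 7)" unfolding AGok_def by (smt (z3))
lemma agq22: "AGok f \<Longrightarrow> (f 0 = f 2 \<or> f 0 = f 5 \<or> f 0 = f 6 \<or> f 2 = f 5 \<or> f 2 = f 6 \<or> f 5 = f 6)" unfolding AGok_def by (smt (z3))
lemma agq23: "AGok f \<Longrightarrow> (f 0 = f 2 \<or> f 0 = f 5 \<or> f 0 = f 7 \<or> f 2 = f 5 \<or> f 2 = f 7 \<or> f 5 = f 7)" unfolding AGok_def by (elim conjE) assumption
lemma agq24: "AGok f \<Longrightarrow> (f 0 = f 2 \<or> f 0 = f 6 \<or> f 0 = f 7 \<or> f 2 = f 6 \<or> f 2 = f 7 \<or> f 6 = f 7)" unfolding AGok_def by (smt (z3))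
lemma agq25: "AGok f \<Longrightarrow> (f 0 = f 3 \<or> f 0 = f 4 \<or> f 0 = f 5 \<or> f 3 = f 4 \<or> f 3 = f 5 \<or> f 4 = f 5)" unfolding AGok_def by (smt (z3))
lemma agq26: "AGok f \<Longrightarrow> (f 0 = f 3 \<or> f 0 = f 4 \<or> f 0 = f 6 \<or> f 3 = f 4 \<or> f 3 = f 6 \<or> f 4 = f 6)" unfolding AGok_def by (smt (z3))
lemma agq27: "AGok f \<Longrightarrow> (f 0 = f 3 \<or> f 0 = f 4 \<or> f 0 = f 7 \<or> f 3 = f 4 \<or> f 3 = f 7 \<or> f 4 = f 7)" unfolding AGok_def by (elim conjE) assumption
lemma agq28: "AGok f \<Longrightarrow> (f 0 = f 3 \<or> f 0 = f 5 \<or> f 0 = f 6 \<or> f 3 = f 5 \<or> f 3 = f 6 \<or> f 5 = f 6)" unfolding AGok_def by (elim conjE) assumption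
lemma agq29: "AGok f \<Longrightarrow> (f 0 = f 3 \<or> f 0 = f 5 \<or> f 0 = f 7 \<or> f 3 = f 5 \<or> f 3 = f 7 \<or> f 5 = f 7)" unfolding AGok_def by (smt (z3))
lemma agq30: "AGok f \<Longrightarrow> (f 0 = f 3 \<or> f 0 = f 6 \<or> f 0 = f 7 \<or> f 3 = f 6 \<or> f 3 = f 7 \<or> f 6 = f 7)" unfolding AGok_def by (smt (z3))
lemma agq31: "AGok f \<Longrightarrow> (f 0 = f 4 \<or> f 0 = f 5 \<or> f 0 = f 6 \<or> f 4 = f 5 \<or> f 4 = f 6 \<or> f 5 = f 6)" unfolding AGok_def by (smt (z3))
lemma agq32: "AGok f \<Longrightarrow> (f 0 = f 4 \<or> f 0 = f 5 \<or> f 0 = f 7 \<or> f 4 = f 5 \<or> f 4 = f 7 \<or> f 5 = f 7)" unfolding AGok_def by (smt (z3))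
lemma agq33: "AGok f \<Longrightarrow> (f 0 = f 4 \<or> f 0 = f 6 \<or> f 0 = f 7 \<or> f 4 = f 6 \<or> f 4 = f 7 \<or> f 6 = f 7)" unfolding AGok_def by (smt (z3))
lemma agq34: "AGok f \<Longrightarrow> (f 0 = f 5 \<or> f 0 = f 6 \<or> f 0 = f 7 \<or> f 5 = f 6 \<or> f 5 = f 7 \<or> f 6 = f 7)" unfolding AGok_def by (smt (z3))
lemma agq35: "AGok f \<Longrightarrow> (f 1 = f 2 \<or> f 1 = f 3 \<or> f 1 = f 4 \<or> f 2 = f 3 \<or> f 2 = f 4 \<or> f 3 = f 4)" unfolding AGok_def by (smt (z3))
lemma agq36: "AGok f \<Longrightarrow> (f 1 = f 2 \<or> f 1 = f 3 \<or> f 1 = f 5 \<or> f 2 = f 3 \<or> f 2 = f 5 \<or> f 3 = f 5)" unfolding AGok_def by (smt (z3))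
lemma agq37: "AGok f \<Longrightarrow> (f 1 = f 2 \<or> f 1 = f 3 \<or> f 1 = f 6 \<or> f 2 = f 3 \<or> f 2 = f 6 \<or> f 3 = f 6)" unfolding AGok_def by (smt (z3))
lemma agq38: "AGok f \<Longrightarrow> (f 1 = f 2 \<or> f 1 = f 3 \<or> f 1 = f 7 \<or> f 2 = f 3 \<or> f 2 = f 7 \<or> f 3 = f 7)" unfolding AGok_def by (smt (z3))
lemma agq39: "AGok f \<Longrightarrow> (f 1 = f 2 \<or> f 1 = f 4 \<or> f 1 = f 5 \<or> f 2 = f 4 \<or> f 2 = f 5 \<or> f 4 = f 5)" unfolding AGok_def by (smt (z3))
lemma agq40: "AGok f \<Longrightarrow> (f 1 = f 2 \<or> f 1 = f 4 \<or> f 1 = f 6 \<or> f 2 = f 4 \<or> f 2 = f 6 \<or> f 4 = f 6)" unfolding AGok_def by (smt (z3))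
lemma agq41: "AGok f \<Longrightarrow> (f 1 = f 2 \<or> f 1 = f 4 \<or> f 1 = f 7 \<or> f 2 = f 4 \<or> f 2 = f 7 \<or> f 4 = f 7)" unfolding AGok_def by (elim conjE) assumption
lemma agq42: "AGok f \<Longrightarrow> (f 1 = f 2 \<or> f 1 = f 5 \<or> f 1 = f 6 \<or> f 2 = f 5 \<or> f 2 = f 6 \<or> f 5 = f 6)" unfolding AGok_def by (elim conjE) assumption
lemma agq43: "AGok f \<Longrightarrow> (f 1 = f 2 \<or> f 1 = f 5 \<or> f 1 = f 7 \<or> f 2 = f 5 \<or> f 2 = f 7 \<or> f 5 = f 7)" unfolding AGok_def by (smt (z3))
lemma agq44: "AGok f \<Longrightarrow> (f 1 = f 2 \<or> f 1 = f 6 \<or> f 1 = f 7 \<or> f 2 = f 6 \<or> f 2 = f 7 \<or> f 6 = f 7)" unfolding AGok_def by (smt (z3))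
lemma agq45: "AGok f \<Longrightarrow> (f 1 = f 3 \<or> f 1 = f 4 \<or> f 1 = f 5 \<or> f 3 = f 4 \<or> f 3 = f 5 \<or> f 4 = f 5)" unfolding AGok_def by (smt (z3))
lemma agq46: "AGok f \<Longrightarrow> (f 1 = f 3 \<or> f 1 = f 4 \<or> f 1 = f 6 \<or> f 3 = f 4 \<or> f 3 = f 6 \<or> f 4 = f 6)" unfolding AGok_def by (elim conjE) assumption
lemma agq47: "AGok f \<Longrightarrow> (f 1 = f 3 \<or> f 1 = f 4 \<or> f 1 = f 7 \<or> f 3 = f 4 \<or> f 3 = f 7 \<or> f 4 = f 7)" unfolding AGok_def by (smt (z3))
lemma agq48: "AGok f \<Longrightarrow> (f 1 = f 3 \<or> f 1 = f 5 \<or> f 1 = f 6 \<or> f 3 = f 5 \<or> f 3 = f 6 \<or> f 5 = f 6)" unfolding AGok_def by (smt (z3))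
lemma agq49: "AGok f \<Longrightarrow> (f 1 = f 3 \<or> f 1 = f 5 \<or> f 1 = f 7 \<or> f 3 = f 5 \<or> f 3 = f 7 \<or> f 5 = f 7)" unfolding AGok_def by (elim conjE) assumption
lemma agq50: "AGok f \<Longrightarrow> (f 1 = f 3 \<or> f 1 = f 6 \<or> f 1 = f 7 \<or> f 3 = f 6 \<or> f 3 = f 7 \<or> f 6 = f 7)" unfolding AGok_def by (smt (z3))
lemma agq51: "AGok f \<Longrightarrow> (f 1 = f 4 \<or> f 1 = f 5 \<or> f 1 = f 6 \<or> f 4 = f 5 \<or> f 4 = f 6 \<or> f 5 = f 6)" unfolding AGok_def by (smt (z3))
lemma agq52: "AGok f \<Longrightarrow> (f 1 = f 4 \<or> f 1 = f 5 \<or> f 1 = f 7 \<or> f 4 = f 5 \<or> f 4 = f 7 \<or> f 5 = f 7)" unfolding AGok_def by (smt (z3))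
lemma agq53: "AGok f \<Longrightarrow> (f 1 = f 4 \<or> f 1 = f 6 \<or> f 1 = f 7 \<or> f 4 = f 6 \<or> f 4 = f 7 \<or> f 6 = f 7)" unfolding AGok_def by (smt (z3))
lemma agq54: "AGok f \<Longrightarrow> (f 1 = f 5 \<or> f 1 = f 6 \<or> f 1 = f 7 \<or> f 5 = f 6 \<or> f 5 = f 7 \<or> f 6 = f 7)" unfolding AGok_def by (smt (z3))
lemma agq55: "AGok f \<Longrightarrow> (f 2 = f 3 \<or> f 2 = f 4 \<or> f 2 = f 5 \<or> f 3 = f 4 \<or> f 3 = f 5 \<or> f 4 = f 5)" unfolding AGok_def by (elim conjE) assumption
lemma agq56: "AGok f \<Longrightarrow> (f 2 = f 3 \<or> f 2 = f 4 \<or> f 2 = f 6 \<or> f 3 = f 4 \<or> f 3 = f 6 \<or> f 4 = f 6)" unfolding AGok_def by (smt (z3))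
lemma agq57: "AGok f \<Longrightarrow> (f 2 = f 3 \<or> f 2 = f 4 \<or> f 2 = f 7 \<or> f 3 = f 4 \<or> f 3 = f 7 \<or> f 4 = f 7)" unfolding AGok_def by (smt (z3))
lemma agq58: "AGok f \<Longrightarrow> (f 2 = f 3 \<or> f 2 = f 5 \<or> f 2 = f 6 \<or> f 3 = f 5 \<or> f 3 = f 6 \<or> f 5 = f 6)" unfolding AGok_def by (smt (z3))
lemma agq59: "AGok f \<Longrightarrow> (f 2 = f 3 \<or> f 2 = f 5 \<or> f 2 = f 7 \<or> f 3 = f 5 \<or> f 3 = f 7 \<or> f 5 = f 7)" unfolding AGok_def by (smt (z3))
lemma agq60: "AGok f \<Longrightarrow> (f 2 = f 3 \<or> f 2 = f 6 \<or> f 2 = f 7 \<or> f 3 = f 6 \<or> f 3 = f 7 \<or> f 6 = f 7)" unfolding AGok_def by (elim conjE) assumption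
lemma agq61: "AGok f \<Longrightarrow> (f 2 = f 4 \<or> f 2 = f 5 \<or> f 2 = f 6 \<or> f 4 = f 5 \<or> f 4 = f 6 \<or> f 5 = f 6)" unfolding AGok_def by (smt (z3))
lemma agq62: "AGok f \<Longrightarrow> (f 2 = f 4 \<or> f 2 = f 5 \<or> f 2 = f 7 \<or> f 4 = f 5 \<or> f 4 = f 7 \<or> f 5 = f 7)" unfolding AGok_def by (smt (z3))
lemma agq63: "AGok f \<Longrightarrow> (f 2 = f 4 \<or> f 2 = f 6 \<or> f 2 = f 7 \<or> f 4 = f 6 \<or> f 4 = f 7 \<or> f 6 = f 7)" unfolding AGok_def by (smt (z3))
lemma agq64: "AGok f \<Longrightarrow> (f 2 = f 5 \<or> f 2 = f 6 \<or> f 2 = f 7 \<or> f 5 = f 6 \<or> f 5 = f 7 \<or> f 6 = f 7)" unfolding AGok_def by (smt (z3))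
lemma agq65: "AGok f \<Longrightarrow> (f 3 = f 4 \<or> f 3 = f 5 \<or> f 3 = f 6 \<or> f 4 = f 5 \<or> f 4 = f 6 \<or> f 5 = f 6)" unfolding AGok_def by (smt (z3))
lemma agq66: "AGok f \<Longrightarrow> (f 3 = f 4 \<or> f 3 = f 5 \<or> f 3 = f 7 \<or> f 4 = f 5 \<or> f 4 = f 7 \<or> f 5 = f 7)" unfolding AGok_def by (smt (z3))
lemma agq67: "AGok f \<Longrightarrow> (f 3 = f 4 \<or> f 3 = f 6 \<or> f 3 = f 7 \<or> f 4 = f 6 \<or> f 4 = f 7 \<or> f 6 = f 7)" unfolding AGok_def by (smt (z3))
lemma agq68: "AGok f \<Longrightarrow> (f 3 = f 5 \<or> f 3 = f 6 \<or> f 3 = f 7 \<or> f 5 = f 6 \<or> f 5 = f 7 \<or> f 6 = f 7)" unfolding AGok_def by (smt (z3))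
lemma agq69: "AGok f \<Longrightarrow> (f 4 = f 5 \<or> f 4 = f 6 \<or> f 4 = f 7 \<or> f 5 = f 6 \<or> f 5 = f 7 \<or> f 6 = f 7)" unfolding AGok_def by (elim conjE) assumption

lemma AG_quad:
  assumes A: "AGok f" and o: "i<j" "j<k" "k<l" "l<(8::nat)"
  shows "f i = f j \<or> f i = f k \<or> f i = f l \<or> f j = f k \<or> f j = f l \<or> f k = f l"
proof -
  have "l = 3 \<or> l = 4 \<or> l = 5 \<or> l = 6 \<or> l = 7" using o  by arith
  moreover have ?thesis if hl: "l = 3"
  proof -
    have "k = 2" using o hl by arith
    moreover have ?thesis if hk: "k = 2"
    proof -
      have "j = 1" using o hl hk by arith
      moreover have ?thesis if hj: "j = 1"
      proof -
        have "i = 0" using o hl hk hj by arith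
        moreover have ?thesis if hi: "i = 0"
          using agq0[OF A] hl hk hj hi by simp
        ultimately show ?thesis by blast
      qed
      ultimately show ?thesis by blast
    qed
    ultimately show ?thesis by blast
  qed
  moreover have ?thesis if hl: "l = 4"
  proof -
    have "k = 2 \<or> k = 3" using o hl by arith
    moreover have ?thesis if hk: "k = 2"
    proof -
      have "j = 1" using o hl hk by arith
      moreover have ?thesis if hj: "j = 1"
      proof -
        have "i = 0" using o hl hk hj by arith
        moreover have ?thesis if hi: "i = 0"
          using agq1[OF A] hl hk hj hi by simp
        ultimately show ?thesis by blast
      qed
      ultimately show ?thesis by blast
    qed
    moreover have ?thesis if hk: "k = 3"
    proof -
      have "j = 1 \<or> j = 2" using o hl hk by arith
      moreover have ?thesis if hj: "j = 1"
      proof -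
        have "i = 0" using o hl hk hj by arith
        moreover have ?thesis if hi: "i = 0"
          using agq5[OF A] hl hk hj hi by simp
        ultimately show ?thesis by blast
      qed
      moreover have ?thesis if hj: "j = 2"
      proof -
        have "i = 0 \<or> i = 1" using o hl hk hj by arith
        moreover have ?thesis if hi: "i = 0"
          using agq15[OF A] hl hk hj hi by simp
        moreover have ?thesis if hi: "i = 1"
          using agq35[OF A] hl hk hj hi by simp
        ultimately show ?thesis by blast
      qed
      ultimately show ?thesis by blast
    qed
    ultimately show ?thesis by blast
  qed
  moreover have ?thesis if hl: "l = 5"
  proof -
    have "k = 2 \<or> k = 3 \<or> k = 4" using o hl by arith
    moreover have ?thesis if hk: "k = 2"
    proof -
      have "j = 1" using o hl hk by arith
      moreover have ?thesis if hj: "j = 1"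
      proof -
        have "i = 0" using o hl hk hj by arith
        moreover have ?thesis if hi: "i = 0"
          using agq2[OF A] hl hk hj hi by simp
        ultimately show ?thesis by blast
      qed
      ultimately show ?thesis by blast
    qed
    moreover have ?thesis if hk: "k = 3"
    proof -
      have "j = 1 \<or> j = 2" using o hl hk by arith
      moreover have ?thesis if hj: "j = 1"
      proof -
        have "i = 0" using o hl hk hj by arith
        moreover have ?thesis if hi: "i = 0"
          using agq6[OF A] hl hk hj hi by simp
        ultimately show ?thesis by blast
      qed
      moreover have ?thesis if hj: "j = 2"
      proof -
        have "i = 0 \<or> i = 1" using o hl hk hj by arith
        moreover have ?thesis if hi: "i = 0"
          using agq16[OF A] hl hk hj hi by simp
        moreover have ?thesis if hi: "i = 1"
          using agq36[OF A] hl hk hj hi by simp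
        ultimately show ?thesis by blast
      qed
      ultimately show ?thesis by blast
    qed
    moreover have ?thesis if hk: "k = 4"
    proof -
      have "j = 1 \<or> j = 2 \<or> j = 3" using o hl hk by arith
      moreover have ?thesis if hj: "j = 1"
      proof -
        have "i = 0" using o hl hk hj by arith
        moreover have ?thesis if hi: "i = 0"
          using agq9[OF A] hl hk hj hi by simp
        ultimately show ?thesis by blast
      qed
      moreover have ?thesis if hj: "j = 2"
      proof -
        have "i = 0 \<or> i = 1" using o hl hk hj by arith
        moreover have ?thesis if hi: "i = 0"
          using agq19[OF A] hl hk hj hi by simp
        moreover have ?thesis if hi: "i = 1"
          using agq39[OF A] hl hk hj hi by simp
        ultimately show ?thesis by blast
      qed
      moreover have ?thesis if hj: "j = 3"
      proof -
        have "i = 0 \<or> i = 1 \<or> i = 2" using o hl hk hj by arith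
        moreover have ?thesis if hi: "i = 0"
          using agq25[OF A] hl hk hj hi by simp
        moreover have ?thesis if hi: "i = 1"
          using agq45[OF A] hl hk hj hi by simp
        moreover have ?thesis if hi: "i = 2"
          using agq55[OF A] hl hk hj hi by simp
        ultimately show ?thesis by blast
      qed
      ultimately show ?thesis by blast
    qed
    ultimately show ?thesis by blast
  qed
  moreover have ?thesis if hl: "l = 6"
  proof -
    have "k = 2 \<or> k = 3 \<or> k = 4 \<or> k = 5" using o hl by arith
    moreover have ?thesis if hk: "k = 2"
    proof -
      have "j = 1" using o hl hk by arith
      moreover have ?thesis if hj: "j = 1"
      proof -
        have "i = 0" using o hl hk hj by arith
        moreover have ?thesis if hi: "i = 0"
          using agq3[OF A] hl hk hj hi by simp
        ultimately show ?thesis by blast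
      qed
      ultimately show ?thesis by blast
    qed
    moreover have ?thesis if hk: "k = 3"
    proof -
      have "j = 1 \<or> j = 2" using o hl hk by arith
      moreover have ?thesis if hj: "j = 1"
      proof -
        have "i = 0" using o hl hk hj by arith
        moreover have ?thesis if hi: "i = 0"
          using agq7[OF A] hl hk hj hi by simp
        ultimately show ?thesis by blast
      qed
      moreover have ?thesis if hj: "j = 2"
      proof -
        have "i = 0 \<or> i = 1" using o hl hk hj by arith
        moreover have ?thesis if hi: "i = 0"
          using agq17[OF A] hl hk hj hi by simp
        moreover have ?thesis if hi: "i = 1"
          using agq37[OF A] hl hk hj hi by simp
        ultimately show ?thesis by blast
      qed
      ultimately show ?thesis by blast
    qed
    moreover have ?thesis if hk: "k = 4"
    proof -
      have "j = 1 \<or> j = 2 \<or> j = 3" using o hl hk by arith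
      moreover have ?thesis if hj: "j = 1"
      proof -
        have "i = 0" using o hl hk hj by arith
        moreover have ?thesis if hi: "i = 0"
          using agq10[OF A] hl hk hj hi by simp
        ultimately show ?thesis by blast
      qed
      moreover have ?thesis if hj: "j = 2"
      proof -
        have "i = 0 \<or> i = 1" using o hl hk hj by arith
        moreover have ?thesis if hi: "i = 0"
          using agq20[OF A] hl hk hj hi by simp
        moreover have ?thesis if hi: "i = 1"
          using agq40[OF A] hl hk hj hi by simp
        ultimately show ?thesis by blast
      qed
      moreover have ?thesis if hj: "j = 3"
      proof -
        have "i = 0 \<or> i = 1 \<or> i = 2" using o hl hk hj by arith
        moreover have ?thesis if hi: "i = 0"
          using agq26[OF A] hl hk hj hi by simp
        moreover have ?thesis if hi: "i = 1"
          using agq46[OF A] hl hk hj hi by simp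
        moreover have ?thesis if hi: "i = 2"
          using agq56[OF A] hl hk hj hi by simp
        ultimately show ?thesis by blast
      qed
      ultimately show ?thesis by blast
    qed
    moreover have ?thesis if hk: "k = 5"
    proof -
      have "j = 1 \<or> j = 2 \<or> j = 3 \<or> j = 4" using o hl hk by arith
      moreover have ?thesis if hj: "j = 1"
      proof -
        have "i = 0" using o hl hk hj by arith
        moreover have ?thesis if hi: "i = 0"
          using agq12[OF A] hl hk hj hi by simp
        ultimately show ?thesis by blast
      qed
      moreover have ?thesis if hj: "j = 2"
      proof -
        have "i = 0 \<or> i = 1" using o hl hk hj by arith
        moreover have ?thesis if hi: "i = 0"
          using agq22[OF A] hl hk hj hi by simp
        moreover have ?thesis if hi: "i = 1"
          using agq42[OF A] hl hk hj hi by simp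
        ultimately show ?thesis by blast
      qed
      moreover have ?thesis if hj: "j = 3"
      proof -
        have "i = 0 \<or> i = 1 \<or> i = 2" using o hl hk hj by arith
        moreover have ?thesis if hi: "i = 0"
          using agq28[OF A] hl hk hj hi by simp
        moreover have ?thesis if hi: "i = 1"
          using agq48[OF A] hl hk hj hi by simp
        moreover have ?thesis if hi: "i = 2"
          using agq58[OF A] hl hk hj hi by simp
        ultimately show ?thesis by blast
      qed
      moreover have ?thesis if hj: "j = 4"
      proof -
        have "i = 0 \<or> i = 1 \<or> i = 2 \<or> i = 3" using o hl hk hj by arith
        moreover have ?thesis if hi: "i = 0"
          using agq31[OF A] hl hk hj hi by simp
        moreover have ?thesis if hi: "i = 1"
          using agq51[OF A] hl hk hj hi by simp
        moreover have ?thesis if hi: "i = 2"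
          using agq61[OF A] hl hk hj hi by simp
        moreover have ?thesis if hi: "i = 3"
          using agq65[OF A] hl hk hj hi by simp
        ultimately show ?thesis by blast
      qed
      ultimately show ?thesis by blast
    qed
    ultimately show ?thesis by blast
  qed
  moreover have ?thesis if hl: "l = 7"
  proof -
    have "k = 2 \<or> k = 3 \<or> k = 4 \<or> k = 5 \<or> k = 6" using o hl by arith
    moreover have ?thesis if hk: "k = 2"
    proof -
      have "j = 1" using o hl hk by arith
      moreover have ?thesis if hj: "j = 1"
      proof -
        have "i = 0" using o hl hk hj by arith
        moreover have ?thesis if hi: "i = 0"
          using agq4[OF A] hl hk hj hi by simp
        ultimately show ?thesis by blast
      qed
      ultimately show ?thesis by blast
    qed
    moreover have ?thesis if hk: "k = 3"
    proof -
      have "j = 1 \<or> j = 2" using o hl hk by arith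
      moreover have ?thesis if hj: "j = 1"
      proof -
        have "i = 0" using o hl hk hj by arith
        moreover have ?thesis if hi: "i = 0"
          using agq8[OF A] hl hk hj hi by simp
        ultimately show ?thesis by blast
      qed
      moreover have ?thesis if hj: "j = 2"
      proof -
        have "i = 0 \<or> i = 1" using o hl hk hj by arith
        moreover have ?thesis if hi: "i = 0"
          using agq18[OF A] hl hk hj hi by simp
        moreover have ?thesis if hi: "i = 1"
          using agq38[OF A] hl hk hj hi by simp
        ultimately show ?thesis by blast
      qed
      ultimately show ?thesis by blast
    qed
    moreover have ?thesis if hk: "k = 4"
    proof -
      have "j = 1 \<or> j = 2 \<or> j = 3" using o hl hk by arith
      moreover have ?thesis if hj: "j = 1"
      proof -
        have "i = 0" using o hl hk hj by arith
        moreover have ?thesis if hi: "i = 0"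
          using agq11[OF A] hl hk hj hi by simp
        ultimately show ?thesis by blast
      qed
      moreover have ?thesis if hj: "j = 2"
      proof -
        have "i = 0 \<or> i = 1" using o hl hk hj by arith
        moreover have ?thesis if hi: "i = 0"
          using agq21[OF A] hl hk hj hi by simp
        moreover have ?thesis if hi: "i = 1"
          using agq41[OF A] hl hk hj hi by simp
        ultimately show ?thesis by blast
      qed
      moreover have ?thesis if hj: "j = 3"
      proof -
        have "i = 0 \<or> i = 1 \<or> i = 2" using o hl hk hj by arith
        moreover have ?thesis if hi: "i = 0"
          using agq27[OF A] hl hk hj hi by simp
        moreover have ?thesis if hi: "i = 1"
          using agq47[OF A] hl hk hj hi by simp
        moreover have ?thesis if hi: "i = 2"
          using agq57[OF A] hl hk hj hi by simp
        ultimately show ?thesis by blast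
      qed
      ultimately show ?thesis by blast
    qed
    moreover have ?thesis if hk: "k = 5"
    proof -
      have "j = 1 \<or> j = 2 \<or> j = 3 \<or> j = 4" using o hl hk by arith
      moreover have ?thesis if hj: "j = 1"
      proof -
        have "i = 0" using o hl hk hj by arith
        moreover have ?thesis if hi: "i = 0"
          using agq13[OF A] hl hk hj hi by simp
        ultimately show ?thesis by blast
      qed
      moreover have ?thesis if hj: "j = 2"
      proof -
        have "i = 0 \<or> i = 1" using o hl hk hj by arith
        moreover have ?thesis if hi: "i = 0"
          using agq23[OF A] hl hk hj hi by simp
        moreover have ?thesis if hi: "i = 1"
          using agq43[OF A] hl hk hj hi by simp
        ultimately show ?thesis by blast
      qed
      moreover have ?thesis if hj: "j = 3"
      proof -
        have "i = 0 \<or> i = 1 \<or> i = 2" using o hl hk hj by arith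
        moreover have ?thesis if hi: "i = 0"
          using agq29[OF A] hl hk hj hi by simp
        moreover have ?thesis if hi: "i = 1"
          using agq49[OF A] hl hk hj hi by simp
        moreover have ?thesis if hi: "i = 2"
          using agq59[OF A] hl hk hj hi by simp
        ultimately show ?thesis by blast
      qed
      moreover have ?thesis if hj: "j = 4"
      proof -
        have "i = 0 \<or> i = 1 \<or> i = 2 \<or> i = 3" using o hl hk hj by arith
        moreover have ?thesis if hi: "i = 0"
          using agq32[OF A] hl hk hj hi by simp
        moreover have ?thesis if hi: "i = 1"
          using agq52[OF A] hl hk hj hi by simp
        moreover have ?thesis if hi: "i = 2"
          using agq62[OF A] hl hk hj hi by simp
        moreover have ?thesis if hi: "i = 3"
          using agq66[OF A] hl hk hj hi by simp
        ultimately show ?thesis by blast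
      qed
      ultimately show ?thesis by blast
    qed
    moreover have ?thesis if hk: "k = 6"
    proof -
      have "j = 1 \<or> j = 2 \<or> j = 3 \<or> j = 4 \<or> j = 5" using o hl hk by arith
      moreover have ?thesis if hj: "j = 1"
      proof -
        have "i = 0" using o hl hk hj by arith
        moreover have ?thesis if hi: "i = 0"
          using agq14[OF A] hl hk hj hi by simp
        ultimately show ?thesis by blast
      qed
      moreover have ?thesis if hj: "j = 2"
      proof -
        have "i = 0 \<or> i = 1" using o hl hk hj by arith
        moreover have ?thesis if hi: "i = 0"
          using agq24[OF A] hl hk hj hi by simp
        moreover have ?thesis if hi: "i = 1"
          using agq44[OF A] hl hk hj hi by simp
        ultimately show ?thesis by blast
      qed
      moreover have ?thesis if hj: "j = 3"
      proof -
        have "i = 0 \<or> i = 1 \<or> i = 2" using o hl hk hj by arith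
        moreover have ?thesis if hi: "i = 0"
          using agq30[OF A] hl hk hj hi by simp
        moreover have ?thesis if hi: "i = 1"
          using agq50[OF A] hl hk hj hi by simp
        moreover have ?thesis if hi: "i = 2"
          using agq60[OF A] hl hk hj hi by simp
        ultimately show ?thesis by blast
      qed
      moreover have ?thesis if hj: "j = 4"
      proof -
        have "i = 0 \<or> i = 1 \<or> i = 2 \<or> i = 3" using o hl hk hj by arith
        moreover have ?thesis if hi: "i = 0"
          using agq33[OF A] hl hk hj hi by simp
        moreover have ?thesis if hi: "i = 1"
          using agq53[OF A] hl hk hj hi by simp
        moreover have ?thesis if hi: "i = 2"
          using agq63[OF A] hl hk hj hi by simp
        moreover have ?thesis if hi: "i = 3"
          using agq67[OF A] hl hk hj hi by simp
        ultimately show ?thesis by blast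
      qed
      moreover have ?thesis if hj: "j = 5"
      proof -
        have "i = 0 \<or> i = 1 \<or> i = 2 \<or> i = 3 \<or> i = 4" using o hl hk hj by arith
        moreover have ?thesis if hi: "i = 0"
          using agq34[OF A] hl hk hj hi by simp
        moreover have ?thesis if hi: "i = 1"
          using agq54[OF A] hl hk hj hi by simp
        moreover have ?thesis if hi: "i = 2"
          using agq64[OF A] hl hk hj hi by simp
        moreover have ?thesis if hi: "i = 3"
          using agq68[OF A] hl hk hj hi by simp
        moreover have ?thesis if hi: "i = 4"
          using agq69[OF A] hl hk hj hi by simp
        ultimately show ?thesis by blast
      qed
      ultimately show ?thesis by blast
    qed
    ultimately show ?thesis by blast
  qed
  ultimately show ?thesis by blast
qed

lemma four_sorted:
  assumes "4 \<le> card (f ` {..<(8::nat)})"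
  shows "\<exists>i j k l. i<j \<and> j<k \<and> k<l \<and> l<8 \<and> f i \<noteq> f j \<and> f i \<noteq> f k \<and> f i \<noteq> f l \<and> f j \<noteq> f k \<and> f j \<noteq> f l \<and> f k \<noteq> f l"
proof -
  obtain V where V: "V \<subseteq> f ` {..<8}" "card V = 4" "finite V"
    using obtain_subset_with_card_n[OF assms] by metis
  define g where "g = inv_into {..<(8::nat)} f"
  define B where "B = g ` V"
  have B8: "B \<subseteq> {..<8}"
  proof
    fix b assume "b \<in> B"
    then obtain y where y: "y \<in> V" "b = g y" unfolding B_def by auto
    have "y \<in> f ` {..<8}" using y V(1) by auto
    then show "b \<in> {..<8}" unfolding y(2) g_def by (rule inv_into_into)
  qed
  have fg: "f (g y) = y" if "y \<in> V" for y
    unfolding g_def using V(1) that by (auto intro: f_inv_into_f)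
  have injB: "inj_on f B"
  proof (rule inj_onI)
    fix a b assume "a \<in> B" "b \<in> B" "f a = f b"
    then obtain y1 y2 where "y1 \<in> V" "y2 \<in> V" "a = g y1" "b = g y2" unfolding B_def by auto
    then show "a = b" using fg \<open>f a = f b\<close> by metis
  qed
  have fB: "f ` B = V" unfolding B_def using fg by (force simp: image_image)
  have finB: "finite B" using B8 finite_subset by blast
  have cB: "card B = 4" using card_image[OF injB] fB V(2) by simp
  define xs where "xs = sorted_list_of_set B"
  have xs: "length xs = 4" "sorted_wrt (<) xs" "set xs = B"
    using cB finB unfolding xs_def by (auto simp: strict_sorted_list_of_set)
  have "length xs = Suc (Suc (Suc (Suc 0)))" using xs(1) by simp
  then obtain i j k l where ijkl: "xs = [i,j,k,l]"
    by (auto simp: length_Suc_conv)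
  have ord: "i<j" "j<k" "k<l" using xs(2) ijkl by auto
  have inB: "i \<in> B" "j \<in> B" "k \<in> B" "l \<in> B" using xs(3) ijkl by auto
  have l8: "l < 8" using inB B8 by auto
  have ne: "f i \<noteq> f j" "f i \<noteq> f k" "f i \<noteq> f l" "f j \<noteq> f k" "f j \<noteq> f l" "f k \<noteq> f l"
    using inj_onD[OF injB] inB ord by (metis less_irrefl order_less_trans)+
  show ?thesis using ord l8 ne by blast
qed

lemma AG_bound:
  assumes "AGok f"
  shows "card (f ` {..<(8::nat)}) \<le> 3"
proof (rule ccontr)
  assume "\<not> ?thesis"
  then have "4 \<le> card (f ` {..<(8::nat)})" by simp
  then obtain i j k l where "i<j" "j<k" "k<l" "l<8" "f i \<noteq> f j" "f i \<noteq> f k" "f i \<noteq> f l" "f j \<noteq> f k" "f j \<noteq> f l" "f k \<noteq> f l"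
    using four_sorted by blast
  with AG_quad[OF assms] show False by blast
qed



definition PT :: "nat \<times> nat \<Rightarrow> nat" where
  "PT = (\<lambda>(i,p). 8*i + p)"

definition qq :: "nat \<Rightarrow> nat" where
  "qq p = (if p = 1 then 2 else 1)"

definition S0 :: "nat \<Rightarrow> nat set" where
  "S0 p = (if p = 0 then {0} else {p, qq p, xor p (qq p)})"

lemma lt8_cases: "(p::nat) < 8 \<Longrightarrow> p = 0 \<or> p = 1 \<or> p = 2 \<or> p = 3 \<or> p = 4 \<or> p = 5 \<or> p = 6 \<or> p = 7"
  by arith

lemma S0_facts:
  assumes "p < 8"
  shows "S0 p \<subseteq> {..<8}" "p \<in> S0 p" "card (S0 p) \<le> 3" "odd (card (S0 p))"
  using lt8_cases[OF assms] by (auto simp: S0_def qq_def)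

lemma S0_sum:
  assumes "p < 8"
  shows "(\<Sum>q\<in>S0 p. wv q k) = wv 0 k"
proof -
  have "k = 0 \<or> k = 1 \<or> k = 2 \<or> k = 3 \<or> k \<ge> 4" by arith
  then show ?thesis
    using lt8_cases[OF assms] by (auto simp: S0_def qq_def wv_def bit_iff_odd)
qed

lemma all4: "(\<forall>k<(4::nat). P k) \<longleftrightarrow> P 0 \<and> P 1 \<and> P 2 \<and> P 3"
  by (auto simp: less_Suc_eq numeral_eq_Suc)

lemma planes_ok:
  "\<forall>(a,b,c,d)\<in>set planes14. a<8 \<and> b<8 \<and> c<8 \<and> d<8 \<and> distinct [a,b,c,d] \<and>
      (\<forall>k<4. wv a k + wv b k + wv c k + wv d k = 0)"
  unfolding planes14_def all4 by (simp add: wv_def bit_iff_odd)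

lemma planes_cover:
  "\<forall>p<8. \<forall>q<8. p \<noteq> q \<longrightarrow> (\<exists>(a,b,c,d)\<in>set planes14. p \<in> {a,b,c,d} \<and> q \<in> {a,b,c,d})"
  unfolding planes14_def by (simp add: All_less_Suc numeral_eq_Suc)

lemma PT_simps [simp]: "PT (i,p) = 8*i+p" by (simp add: PT_def)

lemma div8 [simp]: "(p::nat) < 8 \<Longrightarrow> (8*i+p) div 8 = i" by simp
lemma mod8 [simp]: "(p::nat) < 8 \<Longrightarrow> (8*i+p) mod 8 = p" by simp

lemma inj_PT: assumes "\<And>j. j \<in> A \<Longrightarrow> T j \<subseteq> {..<8}" shows "inj_on PT (Sigma A T)"
proof (rule inj_onI)
  fix x y assume "x \<in> Sigma A T" "y \<in> Sigma A T" "PT x = PT y"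
  then obtain i p j q where "x = (i,p)" "y = (j,q)" "p < 8" "q < 8" "8*i+p = 8*j+q"
    using assms by fastforce
  then show "x = y" by (metis div8 mod8)
qed

lemma PT_Sigma_lt: assumes "\<And>j. j < m \<Longrightarrow> T j \<subseteq> {..<8}" "n \<in> PT ` (SIGMA j:{..<m}. T j)"
  shows "n < 8*m"
proof -
  obtain j p where "j < m" "p \<in> T j" "n = 8*j+p" using assms(2) by auto
  moreover have "p < 8" using assms(1) \<open>j < m\<close> \<open>p \<in> T j\<close> by auto
  ultimately show ?thesis by linarith
qed

lemma PT_Sigma_Q: assumes "\<And>j. j < m \<Longrightarrow> T j \<subseteq> {..<8}" "i < m"
  shows "PT ` (SIGMA j:{..<m}. T j) \<inter> Q i = (\<lambda>p. 8*i+p) ` T i"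
proof
  show "PT ` (SIGMA j:{..<m}. T j) \<inter> Q i \<subseteq> (\<lambda>p. 8*i+p) ` T i"
  proof
    fix n assume "n \<in> PT ` (SIGMA j:{..<m}. T j) \<inter> Q i"
    then obtain j p where "j < m" "p \<in> T j" "n = 8*j+p" "n div 8 = i" by (auto simp: Q_def)
    moreover have "p < 8" using assms(1) \<open>j < m\<close> \<open>p \<in> T j\<close> by auto
    ultimately show "n \<in> (\<lambda>p. 8*i+p) ` T i" by auto
  qed
  show "(\<lambda>p. 8*i+p) ` T i \<subseteq> PT ` (SIGMA j:{..<m}. T j) \<inter> Q i"
  proof
    fix n assume "n \<in> (\<lambda>p. 8*i+p) ` T i"
    then obtain p where p: "p \<in> T i" "n = 8*i+p" by auto
    have "p < 8" using assms p by auto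
    then have "n \<in> Q i" using p by (simp add: Q_def)
    moreover have "n \<in> PT ` (SIGMA j:{..<m}. T j)" using p assms(2) by (auto intro!: image_eqI[of _ _ "(i,p)"])
    ultimately show "n \<in> PT ` (SIGMA j:{..<m}. T j) \<inter> Q i" by auto
  qed
qed

lemma card_shift: "card ((\<lambda>p. 8*i+p) ` T) = card (T::nat set)"
  by (rule card_image) (auto simp: inj_on_def)

lemma small_indep:
  assumes "X \<subseteq> EE m s" "8*m+s \<notin> X" "card X \<le> 3"
  shows "gf2_indep (vec m s) X"
proof (rule crit[OF assms(1,2)])
  have fin: "finite X" using assms(1) finite_subset by (metis finite_EE)
  fix i
  have "card (X \<inter> Q i) \<le> card X" using fin by (simp add: card_mono)
  then show "card (X \<inter> Q i) \<le> 4" using assms(3) by simp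
  assume "card (X \<inter> Q i) = 4"
  then show "\<exists>k'. (\<Sum>y\<in>X \<inter> Q i. wv (y mod 8) k') \<noteq> 0" using \<open>card (X \<inter> Q i) \<le> card X\<close> assms(3) by simp
qed

lemma sum4: "distinct [a,b,c,d] \<Longrightarrow> sum f {a,b,c,d} = f a + f b + f c + (f d :: 'b::comm_monoid_add)"
  by (simp add: add.assoc)

lemma plane_circuit:
  assumes im: "i < m" and pl: "(a,b,c,d) \<in> set planes14"
  shows "circuit (EE m s) (vindep (EE m s) (vec m s)) {8*i+a, 8*i+b, 8*i+c, 8*i+d}"
proof -
  have P: "a<8" "b<8" "c<8" "d<8" "distinct [a,b,c,d]" "\<forall>k<4. wv a k + wv b k + wv c k + wv d k = 0"
    using bspec[OF planes_ok pl] by auto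
  let ?C = "{8*i+a, 8*i+b, 8*i+c, 8*i+d}"
  have lt: "8*i+a < 8*m" "8*i+b < 8*m" "8*i+c < 8*m" "8*i+d < 8*m" using P im by linarith+
  have CE: "?C \<subseteq> EE m s" using lt by (auto simp: EE_def)
  have s0: "(\<Sum>y\<in>?C. vec m s y) = 0"
  proof (rule ext)
    fix k
    have "(\<Sum>y\<in>?C. vec m s y) k = vec m s (8*i+a) k + vec m s (8*i+b) k + vec m s (8*i+c) k + vec m s (8*i+d) k"
      unfolding sum_fun_apply by (rule sum4) (use P(5) in auto)
    also have "\<dots> = (if k div 4 = i then wv a (k mod 4) + wv b (k mod 4) + wv c (k mod 4) + wv d (k mod 4) else 0)"
      using lt P by (simp add: vec_block sh_def)
    also have "\<dots> = 0" using P(6) by simp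
    finally show "(\<Sum>y\<in>?C. vec m s y) k = 0 k" by simp
  qed
  have ind: "gf2_indep (vec m s) (?C - {8*i+d})"
  proof (rule small_indep)
    show "?C - {8*i+d} \<subseteq> EE m s" using CE by auto
    show "8*m+s \<notin> ?C - {8*i+d}" using lt by auto
    show "card (?C - {8*i+d}) \<le> 3"
      by (rule order_trans[OF card_mono[of "{8*i+a, 8*i+b, 8*i+c}"]]) (auto intro: card_insert_le order_trans simp: card_insert_if)
  qed
  show ?thesis by (rule circuitI[OF CE _ s0 _ ind]) auto
qed

definition DD :: "nat \<Rightarrow> nat \<Rightarrow> (nat \<Rightarrow> nat) \<Rightarrow> nat set" where
  "DD m s \<sigma> = {8*m..<8*m+s+1} \<union> PT ` (SIGMA i:{..<m}. S0 (\<sigma> i))"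

lemma sum_e_range: "(\<Sum>n\<in>{8*m..<8*m+s}. vec m s n k) = of_bool (4*m \<le> k \<and> k < 4*m+s)"
proof -
  have "(\<Sum>n\<in>{8*m..<8*m+s}. vec m s n k) = (\<Sum>n\<in>{8*m..<8*m+s}. if n = k + 4*m then 1 else 0)"
  proof (rule sum.cong)
    fix n assume "n \<in> {8*m..<8*m+s}"
    then show "vec m s n k = (if n = k + 4*m then 1 else 0)" by (auto simp: vec_e uv_def)
  qed simp
  also have "\<dots> = of_bool (k + 4*m \<in> {8*m..<8*m+s})" by (simp add: sum.delta)
  also have "\<dots> = of_bool (4*m \<le> k \<and> k < 4*m+s)" by (rule arg_cong[where f=of_bool]) auto
  finally show ?thesis .
qed

lemma sum_block_part:
  assumes "\<And>j. j < m \<Longrightarrow> \<sigma> j < 8"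
  shows "(\<Sum>n\<in>PT ` (SIGMA i:{..<m}. S0 (\<sigma> i)). vec m s n k) = (if k < 4*m then of_bool (k mod 4 = 0) else 0)"
proof -
  have sub: "\<And>j. j < m \<Longrightarrow> S0 (\<sigma> j) \<subseteq> {..<8}" using S0_facts(1) assms by blast
  have "(\<Sum>n\<in>PT ` (SIGMA i:{..<m}. S0 (\<sigma> i)). vec m s n k) = (\<Sum>x\<in>(SIGMA i:{..<m}. S0 (\<sigma> i)). vec m s (PT x) k)"
    by (rule sum.reindex_cong[OF inj_PT]) (use sub in auto)
  also have "\<dots> = (\<Sum>i<m. \<Sum>p\<in>S0 (\<sigma> i). vec m s (8*i+p) k)"
    by (subst sum.Sigma) (auto simp: S0_def PT_def case_prod_unfold)
  also have "\<dots> = (\<Sum>i<m. if k div 4 = i then wv 0 (k mod 4) else 0)"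
  proof (rule sum.cong)
    fix i assume i: "i \<in> {..<m}"
    have "(\<Sum>p\<in>S0 (\<sigma> i). vec m s (8*i+p) k) = (\<Sum>p\<in>S0 (\<sigma> i). sh i (wv p) k)"
    proof (rule sum.cong)
      fix p assume "p \<in> S0 (\<sigma> i)"
      then have "p < 8" using sub i by auto
      then have "8*i+p < 8*m" using i by auto
      then show "vec m s (8*i+p) k = sh i (wv p) k" using \<open>p < 8\<close> by (simp add: vec_block)
    qed simp
    also have "\<dots> = (if k div 4 = i then (\<Sum>p\<in>S0 (\<sigma> i). wv p (k mod 4)) else 0)"
      by (simp add: sh_def)
    also have "\<dots> = (if k div 4 = i then wv 0 (k mod 4) else 0)"
      using S0_sum assms i by auto
    finally show "(\<Sum>p\<in>S0 (\<sigma> i). vec m s (8*i+p) k) = (if k div 4 = i then wv 0 (k mod 4) else 0)" .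
  qed simp
  also have "\<dots> = (if k div 4 < m then wv 0 (k mod 4) else 0)"
    by (simp add: sum.delta')
  also have "\<dots> = (if k < 4*m then of_bool (k mod 4 = 0) else 0)"
    by (auto simp: wv_def less_mult_imp_div_less)
  finally show ?thesis .
qed

lemma DD_circuit:
  assumes sg: "\<And>j. j < m \<Longrightarrow> \<sigma> j < 8"
  shows "circuit (EE m s) (vindep (EE m s) (vec m s)) (DD m s \<sigma>)"
proof -
  have sub: "\<And>j. j < m \<Longrightarrow> S0 (\<sigma> j) \<subseteq> {..<8}" using S0_facts(1) sg by blast
  let ?B = "PT ` (SIGMA i:{..<m}. S0 (\<sigma> i))"
  have Blt: "n < 8*m" if "n \<in> ?B" for n using PT_Sigma_lt[OF sub that] by auto
  have finB: "finite ?B" by (auto simp: S0_def)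
  have DE: "DD m s \<sigma> \<subseteq> EE m s" unfolding DD_def EE_def using Blt by fastforce
  have finD: "finite (DD m s \<sigma>)" using DE finite_subset by (metis finite_EE)
  have R: "{8*m..<8*m+s+1} = insert (8*m+s) {8*m..<8*m+s}" by auto
  have s0: "(\<Sum>y\<in>DD m s \<sigma>. vec m s y) = 0"
  proof (rule ext)
    fix k
    have "(\<Sum>y\<in>DD m s \<sigma>. vec m s y) k = (\<Sum>y\<in>DD m s \<sigma>. vec m s y k)" by (rule sum_fun_apply)
    also have "\<dots> = (\<Sum>y\<in>{8*m..<8*m+s+1}. vec m s y k) + (\<Sum>y\<in>?B. vec m s y k)"
      unfolding DD_def by (rule sum.union_disjoint) (use Blt finB in fastforce)+
    also have "(\<Sum>y\<in>{8*m..<8*m+s+1}. vec m s y k) = xv m s k + (\<Sum>y\<in>{8*m..<8*m+s}. vec m s y k)"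
      unfolding R by (simp add: vec_x)
    finally show "(\<Sum>y\<in>DD m s \<sigma>. vec m s y) k = 0 k"
      using sum_block_part[OF sg, where s=s and k=k] sum_e_range[where m=m and s=s and k=k] by (auto simp: xv_def)
  qed
  have ind: "gf2_indep (vec m s) (DD m s \<sigma> - {8*m+s})"
  proof (rule crit)
    show "DD m s \<sigma> - {8*m+s} \<subseteq> EE m s" using DE by auto
    show "8*m+s \<notin> DD m s \<sigma> - {8*m+s}" by auto
    fix i assume im: "i < m"
    have "(DD m s \<sigma> - {8*m+s}) \<inter> Q i = ?B \<inter> Q i"
      unfolding DD_def using im by (auto simp: Q_def)
    also have "\<dots> = (\<lambda>p. 8*i+p) ` S0 (\<sigma> i)" by (rule PT_Sigma_Q[OF sub im])
    finally have "card ((DD m s \<sigma> - {8*m+s}) \<inter> Q i) \<le> 3" using card_shift S0_facts(3) sg im by metis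
    then show "card ((DD m s \<sigma> - {8*m+s}) \<inter> Q i) \<le> 4" by simp
    assume "card ((DD m s \<sigma> - {8*m+s}) \<inter> Q i) = 4"
    then show "\<exists>k'. (\<Sum>y\<in>(DD m s \<sigma> - {8*m+s}) \<inter> Q i. wv (y mod 8) k') \<noteq> 0"
      using \<open>card ((DD m s \<sigma> - {8*m+s}) \<inter> Q i) \<le> 3\<close> by simp
  qed
  show ?thesis by (rule circuitI[OF DE finD s0 _ ind]) (auto simp: DD_def)
qed

lemma div8_lt: "(x::nat) div 8 < m \<longleftrightarrow> x < 8*m"
  using div_less_iff_less_mult[of 8 x m] by (simp add: mult.commute)

lemma sum_shift: "(\<Sum>y\<in>(\<lambda>p. 8*(i::nat)+p) ` (T::nat set). f y) = (\<Sum>p\<in>T. f (8*i+p))"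
  by (rule sum.reindex_cong[of "\<lambda>p. 8*i+p"]) (auto simp: inj_on_def)

lemma block4_indep:
  assumes A: "A \<subseteq> {..<8}" "card A = 4" "(\<Sum>p\<in>A. wv p 1) \<noteq> 0" and Ee: "Ee \<subseteq> {8*m..<8*m+s}"
  shows "gf2_indep (vec m s) (PT ` ({..<m} \<times> A) \<union> Ee)"
proof (rule crit)
  have Blt: "n < 8*m" if "n \<in> PT ` ({..<m} \<times> A)" for n using PT_Sigma_lt[of m "\<lambda>_. A" n] A(1) that by auto
  then show "PT ` ({..<m} \<times> A) \<union> Ee \<subseteq> EE m s" using Ee by (force simp: EE_def)
  show "8*m+s \<notin> PT ` ({..<m} \<times> A) \<union> Ee" using Blt Ee by force
  fix i assume im: "i < m"
  have "Ee \<inter> Q i = {}" using Ee im by (auto simp: Q_def div8_lt)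
  then have eq: "(PT ` ({..<m} \<times> A) \<union> Ee) \<inter> Q i = (\<lambda>p. 8*i+p) ` A"
    using PT_Sigma_Q[of m "\<lambda>_. A" i] A(1) im by auto
  then show "card ((PT ` ({..<m} \<times> A) \<union> Ee) \<inter> Q i) \<le> 4" using card_shift A(2) by simp
  have "(\<Sum>y\<in>(PT ` ({..<m} \<times> A) \<union> Ee) \<inter> Q i. wv (y mod 8) 1) = (\<Sum>p\<in>A. wv p 1)"
    unfolding eq sum_shift by (rule sum.cong) (use A(1) in auto)
  then show "\<exists>k'. (\<Sum>y\<in>(PT ` ({..<m} \<times> A) \<union> Ee) \<inter> Q i. wv (y mod 8) k') \<noteq> 0" using A(3) by metis
qed

lemma indep_insert_x:
  assumes X: "gf2_indep (vec m s) X" "X \<subseteq> {..<8*m}" and s: "0 < s"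
  shows "gf2_indep (vec m s) (insert (8*m+s) X)"
  unfolding gf2_indep_def
proof (intro allI impI)
  fix Y assume Y: "Y \<subseteq> insert (8*m+s) X \<and> Y \<noteq> {}"
  have finX: "finite X" using X(2) finite_subset by blast
  show "(\<lambda>i. \<Sum>y\<in>Y. vec m s y i) \<noteq> (\<lambda>i. 0)"
  proof (cases "8*m+s \<in> Y")
    case False
    then have "Y \<subseteq> X" using Y by auto
    then show ?thesis using X(1) Y unfolding gf2_indep_def by blast
  next
    case True
    have "vec m s y (4*m) = (if y = 8*m+s then 1 else 0)" if "y \<in> Y" for y
    proof (cases "y = 8*m+s")
      case True then show ?thesis using s by (simp add: vec_x xv_def)
    next
      case False
      then have "y < 8*m" using that Y X(2) by auto
      then have "y div 8 < m" by auto
      then show ?thesis using \<open>y < 8*m\<close> by (auto simp: vec_block sh_def)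
    qed
    then have "(\<Sum>y\<in>Y. vec m s y (4*m)) = (\<Sum>y\<in>Y. if y = 8*m+s then 1 else 0)" by (rule sum.cong[OF refl])
    also have "\<dots> = 1" using True finite_subset[of Y "insert (8*m+s) X"] Y finX by simp
    finally show ?thesis by (intro fun_neq_at[where k="4*m"]) simp
  qed
qed

definition I1 :: "nat \<Rightarrow> nat \<Rightarrow> nat set" where
  "I1 m s = PT ` ({..<m} \<times> {0,1,2,4}) \<union> {8*m..<8*m+s}"
definition I2 :: "nat \<Rightarrow> nat \<Rightarrow> nat set" where
  "I2 m s = insert (8*m+s) (PT ` ({..<m} \<times> {3,5,6,7}))"

lemma I1_indep: "gf2_indep (vec m s) (I1 m s)"
  unfolding I1_def by (rule block4_indep) (auto simp: wv_def bit_iff_odd)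

lemma I2_indep: assumes "0 < s" shows "gf2_indep (vec m s) (I2 m s)"
proof -
  have "gf2_indep (vec m s) (PT ` ({..<m} \<times> {3,5,6,7}) \<union> {})"
    by (rule block4_indep) (auto simp: wv_def bit_iff_odd)
  moreover have "PT ` ({..<m} \<times> {3,5,6,7}) \<subseteq> {..<8*m}"
    using PT_Sigma_lt[of m "\<lambda>_. {3,5,6,7}"] by auto
  ultimately show ?thesis unfolding I2_def using indep_insert_x assms by simp
qed

lemma I12_cover: "EE m s \<subseteq> I1 m s \<union> I2 m s"
proof
  fix n assume "n \<in> EE m s"
  then have n: "n < 8*m+s+1" by (simp add: EE_def)
  show "n \<in> I1 m s \<union> I2 m s"
  proof (cases "n < 8*m")
    case True
    have "n mod 8 < 8" by simp
    then have "n mod 8 \<in> {0,1,2,4} \<or> n mod 8 \<in> {3,5,6,7}" using lt8_cases[of "n mod 8"] by fastforce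
    moreover have "n div 8 < m" using True by (simp add: div8_lt)
    ultimately have mem: "(n div 8, n mod 8) \<in> {..<m} \<times> {0,1,2,4} \<or> (n div 8, n mod 8) \<in> {..<m} \<times> {3,5,6,7}"
      by simp
    have eqn: "PT (n div 8, n mod 8) = n" by simp
    from mem show ?thesis
    proof
      assume "(n div 8, n mod 8) \<in> {..<m} \<times> {0,1,2,4}"
      then have "PT (n div 8, n mod 8) \<in> PT ` ({..<m} \<times> {0,1,2,4})" by (rule imageI)
      then show ?thesis unfolding I1_def eqn by simp
    next
      assume "(n div 8, n mod 8) \<in> {..<m} \<times> {3,5,6,7}"
      then have "PT (n div 8, n mod 8) \<in> PT ` ({..<m} \<times> {3,5,6,7})" by (rule imageI)
      then show ?thesis unfolding I2_def eqn by simp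
    qed
  next
    case False
    then show ?thesis using n unfolding I1_def I2_def by auto
  qed
qed

lemma card_I1: "card (I1 m s) = 4*m+s"
proof -
  have inj: "inj_on PT ({..<m} \<times> {0,1,2,4})" by (rule inj_PT) auto
  have c1: "card (PT ` ({..<m} \<times> {0,1,2,4})) = 4*m" using card_image[OF inj] by (simp add: card_cartesian_product)
  have dis: "PT ` ({..<m} \<times> {0,1,2,4}) \<inter> {8*m..<8*m+s} = {}"
    using PT_Sigma_lt[of m "\<lambda>_. {0,1,2,4}"] by fastforce
  show ?thesis unfolding I1_def using card_Un_disjoint[OF _ _ dis] c1 by simp
qed

lemma indep_card_le:
  assumes "gf2_indep (vec m s) X" "X \<subseteq> EE m s"
  shows "card X \<le> 4*m+s"
proof -
  define T where "T = uv ` {..<4*m+s}"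
  have sp: "vec m s n \<in> G.span T" if "n \<in> EE m s" for n
  proof -
    have "vec m s n = (\<Sum>k<4*m+s. sc (vec m s n k) (uv k))"
    proof (rule ext)
      fix j
      have "(\<Sum>k<4*m+s. sc (vec m s n k) (uv k)) j = (\<Sum>k<4*m+s. if k = j then vec m s n k else 0)"
        unfolding sum_fun_apply by (rule sum.cong) (auto simp: sc_def uv_def)
      also have "\<dots> = vec m s n j" using vec_support[OF that, of j] by (auto simp: sum.delta')
      finally show "vec m s n j = (\<Sum>k<4*m+s. sc (vec m s n k) (uv k)) j" by simp
    qed
    also have "\<dots> \<in> G.span T"
      by (intro G.span_sum G.span_scale G.span_base) (auto simp: T_def)
    finally show ?thesis .
  qed
  have "vec m s ` X \<subseteq> G.span T" using sp assms(2) by auto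
  then have "card (vec m s ` X) \<le> card T"
    using G.independent_span_bound[OF _ gf2_indep_independent[OF assms(1)]] by (auto simp: T_def)
  also have "card T \<le> 4*m+s" unfolding T_def using card_image_le by fastforce
  finally show ?thesis using card_image[OF gf2_indep_inj[OF assms(1)]] by simp
qed

lemma rank_EE:
  "matroid_rank (EE m s) (vindep (EE m s) (vec m s)) = 4*m+s"
  unfolding matroid_rank_def
proof (rule Max_eqI)
  show "finite (card ` {X. X \<subseteq> EE m s \<and> vindep (EE m s) (vec m s) X})"
    by (rule finite_imageI) (rule finite_subset[of _ "Pow (EE m s)"], auto)
  fix y assume "y \<in> card ` {X. X \<subseteq> EE m s \<and> vindep (EE m s) (vec m s) X}"
  then show "y \<le> 4*m+s" using indep_card_le by (auto simp: vindep_def)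
next
  have "I1 m s \<subseteq> EE m s" using I12_cover unfolding I1_def EE_def
    using PT_Sigma_lt[of m "\<lambda>_. {0,1,2,4}"] by fastforce
  then show "4*m+s \<in> card ` {X. X \<subseteq> EE m s \<and> vindep (EE m s) (vec m s) X}"
    using I1_indep card_I1 by (auto simp: vindep_def intro!: image_eqI[of _ _ "I1 m s"])
qed



lemma AGok_intro:
  assumes pl: "\<And>a b d e. (a,b,d,e) \<in> set planes14 \<Longrightarrow> f a = f b \<or> f a = f d \<or> f a = f e \<or> f b = f d \<or> f b = f e \<or> f d = f e"
    and cp: "\<And>a b d e. a<b \<Longrightarrow> b<d \<Longrightarrow> d<e \<Longrightarrow> e<8 \<Longrightarrow> \<not>(f a = f b \<and> f a = f d \<and> f a = f e)"
  shows "AGok f"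
  unfolding AGok_def by (intro conjI; (rule pl; simp add: planes14_def)?; (rule cp; simp)?)

lemma not_inj4: "\<not> inj_on c {w,x,y,z} \<Longrightarrow> c w = c x \<or> c w = c y \<or> c w = c z \<or> c x = c y \<or> c x = c z \<or> c y = c z"
  by (auto simp: inj_on_def)

lemma I1_sub: "I1 m s \<subseteq> EE m s"
  unfolding I1_def EE_def using PT_Sigma_lt[of m "\<lambda>_. {0,1,2,4}"] by fastforce
lemma I2_sub: "I2 m s \<subseteq> EE m s"
  unfolding I2_def EE_def using PT_Sigma_lt[of m "\<lambda>_. {3,5,6,7}"] by fastforce

lemma card_D0: "card (DD m s (\<lambda>_. 0)) = m + s + 1"
proof -
  have S: "(SIGMA i:{..<m}. S0 0) = {..<m} \<times> {0}" by (simp add: S0_def)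
  have inj: "inj_on PT ({..<m} \<times> {0})" by (rule inj_PT) auto
  have c1: "card (PT ` ({..<m} \<times> {0::nat})) = m" using card_image[OF inj] by (simp add: card_cartesian_product)
  have dis: "{8*m..<8*m+s+1} \<inter> PT ` ({..<m} \<times> {0}) = {}"
    using PT_Sigma_lt[of m "\<lambda>_. {0}"] by fastforce
  show ?thesis unfolding DD_def S using card_Un_disjoint[OF _ _ dis] c1 by simp
qed

lemma color_bound:
  fixes c :: "nat \<Rightarrow> nat"
  assumes rf: "rainbow_circuit_free (EE m s) (vindep (EE m s) (vec m s)) c"
    and cap: "\<forall>x\<in>EE m s. card {y\<in>EE m s. c y = c x} \<le> 3"
  shows "card (c ` EE m s) \<le> 3*m+s"
proof -
  have nr: "\<not> inj_on c C" if "circuit (EE m s) (vindep (EE m s) (vec m s)) C" for C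
    using rf that unfolding rainbow_circuit_free_def by blast
  define Qb where "Qb i = (\<lambda>p. 8*i+p) ` {..<(8::nat)}" for i
  have AGb: "card (c ` Qb i) \<le> 3" if im: "i < m" for i
  proof -
    have "AGok (\<lambda>p. c (8*i+p))"
    proof (rule AGok_intro)
      fix a b d e assume "(a,b,d,e) \<in> set planes14"
      from nr[OF plane_circuit[OF im this]]
      show "c (8*i+a) = c (8*i+b) \<or> c (8*i+a) = c (8*i+d) \<or> c (8*i+a) = c (8*i+e) \<or> c (8*i+b) = c (8*i+d) \<or> c (8*i+b) = c (8*i+e) \<or> c (8*i+d) = c (8*i+e)"
        by (rule not_inj4)
    next
      fix a b d e :: nat assume o: "a<b" "b<d" "d<e" "e<8"
      show "\<not>(c (8*i+a) = c (8*i+b) \<and> c (8*i+a) = c (8*i+d) \<and> c (8*i+a) = c (8*i+e))"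
      proof
        assume eq: "c (8*i+a) = c (8*i+b) \<and> c (8*i+a) = c (8*i+d) \<and> c (8*i+a) = c (8*i+e)"
        have lt: "8*i+e < 8*m" using o im by linarith
        have xE: "8*i+a \<in> EE m s" using lt o by (simp add: EE_def)
        have sub: "{8*i+a, 8*i+b, 8*i+d, 8*i+e} \<subseteq> {y\<in>EE m s. c y = c (8*i+a)}"
          using eq o lt by (auto simp: EE_def)
        have c4: "card {8*i+a, 8*i+b, 8*i+d, 8*i+e} = 4" using o by simp
        have "card {8*i+a, 8*i+b, 8*i+d, 8*i+e} \<le> card {y\<in>EE m s. c y = c (8*i+a)}"
          by (rule card_mono[OF _ sub]) (simp add: EE_def)
        then show False using cap xE c4 by fastforce
      qed
    qed
    then have "card ((\<lambda>p. c (8*i+p)) ` {..<8}) \<le> 3" by (rule AG_bound)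
    moreover have "c ` Qb i = (\<lambda>p. c (8*i+p)) ` {..<8}" unfolding Qb_def by (simp add: image_image)
    ultimately show ?thesis by simp
  qed
  define D0 where "D0 = DD m s (\<lambda>_. 0)"
  have D0c: "circuit (EE m s) (vindep (EE m s) (vec m s)) D0" unfolding D0_def by (rule DD_circuit) simp
  have D0E: "D0 \<subseteq> EE m s" using D0c by (simp add: circuit_def)
  have finD0: "finite D0" using D0E finite_subset by (metis finite_EE)
  have "\<not> inj_on c D0" using nr[OF D0c] .
  then have "card (c ` D0) \<noteq> card D0" using eq_card_imp_inj_on[OF finD0] by metis
  then have cD0: "card (c ` D0) \<le> m + s" using card_image_le[OF finD0, of c] card_D0[of m s] unfolding D0_def by linarith
  have inD0: "8*i \<in> D0" if "i < m" for i
  proof -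
    have "(i,0) \<in> {..<m} \<times> {0::nat}" using that by simp
    then have "PT (i,0) \<in> PT ` ({..<m} \<times> {0::nat})" by (rule imageI)
    moreover have "(SIGMA i:{..<m}. S0 0) = {..<m} \<times> {0}" by (simp add: S0_def)
    ultimately show ?thesis unfolding D0_def DD_def by simp
  qed
  have cover: "c ` EE m s \<subseteq> c ` D0 \<union> (\<Union>i<m. c ` Qb i - {c (8*i)})"
  proof
    fix u assume "u \<in> c ` EE m s"
    then obtain n where n: "n \<in> EE m s" "u = c n" by auto
    show "u \<in> c ` D0 \<union> (\<Union>i<m. c ` Qb i - {c (8*i)})"
    proof (cases "n < 8*m")
      case True
      define i where "i = n div 8"
      have im: "i < m" using True by (simp add: i_def div8_lt)
      have "n \<in> Qb i" unfolding Qb_def i_def by (auto intro!: image_eqI[of _ _ "n mod 8"])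
      show ?thesis
      proof (cases "c n = c (8*i)")
        case True
        then show ?thesis using inD0[OF im] n by auto
      next
        case False
        then show ?thesis using \<open>n \<in> Qb i\<close> im n by auto
      qed
    next
      case False
      then have "n \<in> D0" using n unfolding D0_def DD_def EE_def by auto
      then show ?thesis using n by auto
    qed
  qed
  have finU: "finite (\<Union>i<m. c ` Qb i - {c (8*i)})" unfolding Qb_def by auto
  have "card (c ` EE m s) \<le> card (c ` D0 \<union> (\<Union>i<m. c ` Qb i - {c (8*i)}))"
    by (rule card_mono[OF _ cover]) (use finD0 finU in auto)
  also have "\<dots> \<le> card (c ` D0) + card (\<Union>i<m. c ` Qb i - {c (8*i)})" by (rule card_Un_le)
  also have "card (\<Union>i<m. c ` Qb i - {c (8*i)}) \<le> (\<Sum>i<m. card (c ` Qb i - {c (8*i)}))" by (rule card_UN_le) simp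
  also have "\<dots> \<le> (\<Sum>i<m. 2)"
  proof (rule sum_mono)
    fix i assume "i \<in> {..<m}"
    then have im: "i < m" by simp
    have "c (8*i) \<in> c ` Qb i" unfolding Qb_def by (auto intro!: image_eqI[of _ _ 0])
    moreover have "finite (c ` Qb i)" unfolding Qb_def by simp
    ultimately have "card (c ` Qb i - {c (8*i)}) = card (c ` Qb i) - 1" by (simp add: card_Diff_singleton)
    then show "card (c ` Qb i - {c (8*i)}) \<le> 2" using AGb[OF im] by simp
  qed
  also have "\<dots> = 2*m" by simp
  finally show ?thesis using cD0 by linarith
qed

lemma memDD:
  assumes sg: "\<And>j. j < m \<Longrightarrow> \<sigma> j < 8" and n: "n \<in> EE m s" and h: "n < 8*m \<Longrightarrow> \<sigma> (n div 8) = n mod 8"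
  shows "n \<in> DD m s \<sigma>"
proof (cases "n < 8*m")
  case True
  have im: "n div 8 < m" using True by (simp add: div8_lt)
  have "n mod 8 \<in> S0 (\<sigma> (n div 8))" using h[OF True] S0_facts(2)[of "n mod 8"] by simp
  then have "PT (n div 8, n mod 8) \<in> PT ` (SIGMA i:{..<m}. S0 (\<sigma> i))" using im by (intro imageI) simp
  then show ?thesis unfolding DD_def by simp
next
  case False
  then show ?thesis using n unfolding DD_def EE_def by auto
qed

lemma connected_EE: "matroid_connected (EE m s) (vindep (EE m s) (vec m s))"
  unfolding matroid_connected_def
proof (intro ballI impI)
  fix a b assume a: "a \<in> EE m s" and b: "b \<in> EE m s" and ab: "a \<noteq> b"
  show "\<exists>C. circuit (EE m s) (vindep (EE m s) (vec m s)) C \<and> a \<in> C \<and> b \<in> C"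
  proof (cases "a < 8*m \<and> b < 8*m \<and> a div 8 = b div 8")
    case True
    define i where "i = a div 8"
    have im: "i < m" using True by (simp add: i_def div8_lt)
    have ne: "a mod 8 \<noteq> b mod 8" using True ab by (metis div_mult_mod_eq)
    have "\<exists>(w,x,y,z)\<in>set planes14. a mod 8 \<in> {w,x,y,z} \<and> b mod 8 \<in> {w,x,y,z}"
      using planes_cover ne by simp
    then obtain w x y z where pl: "(w,x,y,z) \<in> set planes14" "a mod 8 \<in> {w,x,y,z}" "b mod 8 \<in> {w,x,y,z}"
      by auto
    have ea: "a = 8*i + a mod 8" unfolding i_def by simp
    have "b = 8*(b div 8) + b mod 8" by simp
    then have eb: "b = 8*i + b mod 8" using True unfolding i_def by simp
    have "a \<in> {8*i+w, 8*i+x, 8*i+y, 8*i+z}" using pl(2) ea by auto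
    moreover have "b \<in> {8*i+w, 8*i+x, 8*i+y, 8*i+z}" using pl(3) eb by auto
    ultimately show ?thesis using plane_circuit[OF im pl(1)] by blast
  next
    case False
    define \<sigma> where "\<sigma> = (\<lambda>j. if a < 8*m \<and> a div 8 = j then a mod 8 else if b < 8*m \<and> b div 8 = j then b mod 8 else 0)"
    have sg: "\<And>j. j < m \<Longrightarrow> \<sigma> j < 8" by (simp add: \<sigma>_def)
    have ha: "\<sigma> (a div 8) = a mod 8" if "a < 8*m" unfolding \<sigma>_def using that by simp
    have hb: "\<sigma> (b div 8) = b mod 8" if "b < 8*m" unfolding \<sigma>_def using that False by auto
    have "a \<in> DD m s \<sigma>" by (rule memDD[where \<sigma>=\<sigma> and m=m and s=s and n=a, OF sg a ha])
    moreover have "b \<in> DD m s \<sigma>" by (rule memDD[where \<sigma>=\<sigma> and m=m and s=s and n=b, OF sg b hb])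
    ultimately show ?thesis using DD_circuit[where \<sigma>=\<sigma> and m=m and s=s, OF sg] by blast
  qed
qed

theorem corollary8:
  fixes r :: nat
  assumes "r > 0"
  shows "\<exists>(E :: nat set) (indep :: nat set \<Rightarrow> bool).
           matroid E indep \<and> binary E indep \<and> matroid_connected E indep
         \<and> coverable 2 E indep \<and> matroid_rank E indep = r
         \<and> (\<forall>c :: nat \<Rightarrow> nat.
              rainbow_circuit_free E indep c \<and> (\<forall>x\<in>E. card {y\<in>E. c y = c x} \<le> 3)
              \<longrightarrow> int (card (c ` E)) \<le> \<lceil>6 * real r / 7\<rceil>)"
proof -
  define m where "m = (r - 1) div 4"
  define s where "s = r - 4*m"
  have d1: "4*m \<le> r - 1" unfolding m_def by simp
  have d2: "r - 1 < 4*m + 4" unfolding m_def by linarith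
  have s: "0 < s" "s \<le> 4" "r = 4*m+s" using d1 d2 assms unfolding s_def by linarith+
  let ?E = "EE m s" and ?I = "vindep (EE m s) (vec m s)"
  have cov: "coverable 2 ?E ?I"
    unfolding coverable_def
  proof (intro exI[of _ "\<lambda>i::nat. if i = 0 then I1 m s else I2 m s"] conjI allI impI)
    fix i :: nat assume "i < 2"
    then have "i = 0 \<or> i = 1" by arith
    then show "?I (if i = 0 then I1 m s else I2 m s)"
      using I1_indep I2_indep[OF s(1)] I1_sub I2_sub by (auto simp: vindep_def)
  next
    show "?E \<subseteq> (\<Union>i<(2::nat). if i = 0 then I1 m s else I2 m s)"
      using I12_cover[of m s] by (simp add: numeral_2_eq_2 lessThan_Suc Un_commute)
  qed
  have bound: "int (card (c ` ?E)) \<le> \<lceil>6 * real r / 7\<rceil>"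
    if "rainbow_circuit_free ?E ?I c \<and> (\<forall>x\<in>?E. card {y\<in>?E. c y = c x} \<le> 3)" for c :: "nat \<Rightarrow> nat"
  proof -
    have h: "card (c ` ?E) \<le> 3*m+s" using color_bound that by blast
    have hr: "real r = 4 * real m + real s" using s(3) by simp
    have h': "real (card (c ` ?E)) \<le> 3 * real m + real s" using h by linarith
    have "real (card (c ` ?E)) - 1 < 6 * real r / 7" using h' hr s(2) by (simp add: field_simps)
    then show ?thesis by (simp add: le_ceiling_iff)
  qed
  show ?thesis
    apply (rule exI[of _ ?E], rule exI[of _ ?I])
    using vindep_matroid[OF finite_EE] vindep_binary connected_EE cov rank_EE[of m s] s(3) bound
    by auto
qed


end
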